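(* Let $K\subseteq\mathbb{R}^n$ be nonempty, compact and convex, and let $F:K\to\mathbb{R}^n$ be continuously differentiable and strongly monotone, i.e. there is $c>0$ with $(x-y)^T(F(x)-F(y))\ge c\|x-y\|^2$ for all $x,y\in K$. Let $x^*$ be the unique solution of the variational inequality $VI(K,F)$. Consider the best response dynamics subject to a dynamics disturbance $\varepsilon(t)$ and a cost disturbance $\Delta(t)$: $$\dot x(t)\in \beta(\tilde\pi(t))-x(t)+\varepsilon(t),\qquad \tilde\pi(t)=F(x(t))+\Delta(t),\qquad \beta(\pi)=\arg\min_{y\in K}y^T\pi,$$ where $\varepsilon$ is admissible and $\Delta:[0,\infty)\to\mathbb{R}^n$ is bounded, differentiable, and has bounded derivative $\dot\Delta$. Then there exist $\omega\in\mathcal{KL}$ and $\gamma_1,\gamma_2\in\mathcal{K}$ such that the solution satisfies, for all $t\ge0$, $$\|x(t)-x^*\|\le \omega(\|x(0)-x^*\|,t)+\gamma_1\big(\max\{\|\varepsilon\|_\infty,\|\Delta\|_\infty\}\big)+\gamma_2(\|\dot\Delta\|_\infty).$$ In particular, if $\varepsilon(t)\to0$, $\Delta(t)\to0$ and $\dot\Delta(t)\to0$ as $t\to\infty$, then $x(t)\to x^*$.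
   Context: A point $x\in K$ solves the variational inequality $VI(K,F)$ if $(y-x)^TF(x)\ge0$ for all $y\in K$. A dynamics disturbance $\varepsilon:[0,\infty)\to\mathbb{R}^n$ is called admissible if it is piecewise continuous, bounded, and the resulting trajectory satisfies $\dot x(t)\in TK(x(t))$ for all $t\ge0$ (where $TK(x)$ is the tangent cone of $K$ at $x$), i.e. the trajectory $x(t)$ remains in $K$; $x(0)\in K$. Solutions are understood in the Carathéodory sense. $\|\cdot\|_\infty$ denotes the supremum over $t\ge0$ of the Euclidean norm. $\mathcal{K}$: continuous strictly increasing functions $[0,\infty)\to[0,\infty)$ vanishing at $0$; $\mathcal{KL}$: functions $\omega(r,t)$ that are of class $\mathcal{K}$ in $r$ for each fixed $t$ and decreasing to $0$ in $t$ for each fixed $r$. *)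

theory Defs
  imports "HOL-Analysis.Analysis"
begin

definition VI_sol :: "'a::euclidean_space set \<Rightarrow> ('a \<Rightarrow> 'a) \<Rightarrow> 'a \<Rightarrow> bool" where
  "VI_sol K F x \<longleftrightarrow> x \<in> K \<and> (\<forall>y\<in>K. (y - x) \<bullet> F x \<ge> 0)"

definition best_resp :: "'a::euclidean_space set \<Rightarrow> 'a \<Rightarrow> 'a set" where
  "best_resp K p = {y \<in> K. \<forall>z\<in>K. y \<bullet> p \<le> z \<bullet> p}"

definition classK :: "(real \<Rightarrow> real) \<Rightarrow> bool" where
  "classK g \<longleftrightarrow> continuous_on {0..} g \<and> strict_mono_on {0..} g \<and> g 0 = 0"

definition classKL :: "(real \<Rightarrow> real \<Rightarrow> real) \<Rightarrow> bool" where
  "classKL w \<longleftrightarrow> (\<forall>t\<ge>0. classK (\<lambda>r. w r t)) \<and>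
     (\<forall>r\<ge>0. (\<forall>s t. 0 \<le> s \<longrightarrow> s \<le> t \<longrightarrow> w r t \<le> w r s) \<and> ((\<lambda>t. w r t) \<longlongrightarrow> 0) at_top)"

definition supnorm :: "(real \<Rightarrow> 'a::real_normed_vector) \<Rightarrow> real" where
  "supnorm f = (SUP t\<in>{0..}. norm (f t))"

definition piecewise_cont :: "(real \<Rightarrow> 'a::real_normed_vector) \<Rightarrow> bool" where
  "piecewise_cont f \<longleftrightarrow> (\<forall>T\<ge>0. \<exists>S. finite S \<and> S \<subseteq> {0..T} \<and>
      (\<forall>t\<in>{0..T} - S. continuous (at t within {0..}) f) \<and>
      (\<forall>s\<in>S. (\<exists>l. (f \<longlongrightarrow> l) (at_right s)) \<and> (0 < s \<longrightarrow> (\<exists>l. (f \<longlongrightarrow> l) (at_left s)))))"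

text \<open>Caratheodory solution on [0,inf) of
  x'(t) in beta(F(x t) + Delta t) - x t + eps t:
  x is absolutely continuous (an indefinite Lebesgue integral of some v) and
  v(s) lies in the right-hand side for almost every s >= 0.\<close>
definition BR_solution ::
  "'a::euclidean_space set \<Rightarrow> ('a \<Rightarrow> 'a) \<Rightarrow> (real \<Rightarrow> 'a) \<Rightarrow> (real \<Rightarrow> 'a) \<Rightarrow> (real \<Rightarrow> 'a) \<Rightarrow> bool" where
  "BR_solution K F eps Dl x \<longleftrightarrow>
     (\<exists>v. (\<forall>t\<ge>0. v absolutely_integrable_on {0..t} \<and> (v has_integral (x t - x 0)) {0..t}) \<and>
          (AE s in lebesgue. s \<ge> 0 \<longrightarrow>
              v s \<in> (\<lambda>y. y - x s + eps s) ` best_resp K (F (x s) + Dl s)))"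

definition admissible :: "'a::euclidean_space set \<Rightarrow> (real \<Rightarrow> 'a) \<Rightarrow> (real \<Rightarrow> 'a) \<Rightarrow> bool" where
  "admissible K eps x \<longleftrightarrow> piecewise_cont eps \<and> bounded (eps ` {0..}) \<and> (\<forall>t\<ge>0. x t \<in> K)"

end

theory Submission
  imports Defs
begin

lemma descent_interval:
  fixes k :: "real \<Rightarrow> real"
  assumes ab: "a \<le> b" and kc: "continuous_on {a..b} k"
    and step: "\<And>t d. t \<in> {a<..b} \<Longrightarrow> d > 0 \<Longrightarrow> \<exists>s. 0 < s \<and> s < d \<and> k t \<le> k (t - s)"
  shows "k b \<le> k a"
proof -
  define S where "S = {t \<in> {a..b}. k b \<le> k t}"
  have cl: "closed S" unfolding S_def
    by (rule continuous_on_closed_Collect_le[OF continuous_on_const kc closed_atLeastAtMost])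
  have ne: "S \<noteq> {}" using ab unfolding S_def by auto
  have bb: "bdd_below S" unfolding S_def by (auto intro: bdd_belowI[where m=a])
  define T where "T = Inf S"
  have TS: "T \<in> S" unfolding T_def using closed_contains_Inf[OF ne bb cl] .
  show ?thesis
  proof (cases "T = a")
    case True then show ?thesis using TS unfolding S_def by auto
  next
    case False
    then have aT: "a < T" "T \<le> b" using TS unfolding S_def by auto
    obtain s where s: "0 < s" "s < T - a" "k T \<le> k (T - s)" using step[of T "T - a"] aT by auto
    have "T - s \<in> S" using s TS unfolding S_def by auto
    then have "T \<le> T - s" unfolding T_def using bb by (rule cInf_lower)
    then show ?thesis using s by simp
  qed
qed

lemma meas_Ioc: "l \<le> u \<Longrightarrow> measure lebesgue {l<..u::real} = u - l"
  by simp
lemma lm_Ioc: "{l<..u::real} \<in> lmeasurable"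
  by (simp add: fmeasurable_Diff greaterThanAtMost_eq_atLeastAtMost_diff)
lemma lm_open_Icc: "open G \<Longrightarrow> G \<inter> {l..u::real} \<in> lmeasurable"
  by (metis borel_open fmeasurable_Int_fmeasurable inf_commute
    lmeasurable_interval(1) sets_completionI_sets sets_lborel)

lemma negligible_open_cover:
  assumes "negligible N" "e > 0"
  obtains G where "open G" "N \<subseteq> G" "G \<in> lmeasurable" "measure lebesgue G < e"
proof -
  obtain G where G: "open G" "N \<subseteq> G" "(G - N) \<in> lmeasurable" "emeasure lebesgue (G - N) < ennreal e"
    using sets_lebesgue_outer_open[OF negligible_imp_sets[OF assms(1)] assms(2)] by blast
  have "G = (G - N) \<union> N" using G by blast
  have Nl: "N \<in> lmeasurable" "measure lebesgue N = 0" using assms(1)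
    by (auto simp: negligible_imp_measurable negligible_imp_measure0)
  have Gl: "G \<in> lmeasurable" using G(3) Nl(1) \<open>G = (G - N) \<union> N\<close>
    by (metis fmeasurable.Un)
  have "measure lebesgue G \<le> measure lebesgue (G - N) + measure lebesgue N"
    by (metis \<open>G = (G - N) \<union> N\<close> G(3) Nl(1) fmeasurableD measure_Un_le)
  moreover have "measure lebesgue (G - N) < e"
    using G(3,4) by (simp add: emeasure_eq_measure2 ennreal_less_iff)
  ultimately have "measure lebesgue G < e" using Nl by simp
  then show ?thesis using that G Gl by blast
qed

lemma lip_descent:
  fixes g :: "real \<Rightarrow> real"
  assumes ab: "a \<le> b" and N: "negligible N"
    and lip: "\<And>t t'. t \<in> {a..b} \<Longrightarrow> t' \<in> {a..b} \<Longrightarrow> \<bar>g t - g t'\<bar> \<le> L * \<bar>t - t'\<bar>"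
    and good: "\<And>t e. t \<in> {a<..b} \<Longrightarrow> t \<notin> N \<Longrightarrow> e > 0 \<Longrightarrow>
                 \<exists>d>0. \<forall>s. 0 < s \<longrightarrow> s < d \<longrightarrow> g t - g (t - s) \<le> e * s"
  shows "g b \<le> g a"
proof -
  define L' where "L' = \<bar>L\<bar>"
  have L': "L' \<ge> 0" unfolding L'_def by simp
  have lip': "\<bar>g t - g t'\<bar> \<le> L' * \<bar>t - t'\<bar>" if "t \<in> {a..b}" "t' \<in> {a..b}" for t t'
  proof -
    have "L * \<bar>t - t'\<bar> \<le> L' * \<bar>t - t'\<bar>" unfolding L'_def by (rule mult_right_mono) auto
    then show ?thesis using lip[OF that] by linarith
  qed
  have main: "g b \<le> g a + L' * e + e * (b - a)" if e: "e > 0" for e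
  proof -
    obtain G where G: "open G" "N \<subseteq> G" "G \<in> lmeasurable" "measure lebesgue G < e"
      using negligible_open_cover[OF N e] by blast
    define \<mu> where "\<mu> t = measure lebesgue (G \<inter> {a..t})" for t
    have \<mu>mono: "\<mu> t \<le> \<mu> t'" if "t \<le> t'" for t t'
      unfolding \<mu>_def using that
      by (intro measure_mono_fmeasurable) (auto intro: lm_open_Icc[OF G(1)] fmeasurableD)
    have \<mu>lip: "\<mu> t' - \<mu> t \<le> t' - t" if "t \<le> t'" for t t'
    proof -
      have "G \<inter> {a..t'} \<subseteq> (G \<inter> {a..t}) \<union> {t<..t'}" by auto
      then have "\<mu> t' \<le> measure lebesgue ((G \<inter> {a..t}) \<union> {t<..t'})"
        unfolding \<mu>_def
        by (intro measure_mono_fmeasurable) (auto intro!: lm_open_Icc[OF G(1)] fmeasurableD lm_Ioc)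
      also have "\<dots> \<le> \<mu> t + measure lebesgue {t<..t'}"
        unfolding \<mu>_def by (intro measure_Un_le) (auto intro!: lm_open_Icc[OF G(1)] fmeasurableD lm_Ioc)
      finally show ?thesis using that by simp
    qed
    have \<mu>step: "\<mu> t \<ge> \<mu> (t - s) + s" if "0 < s" "{t - s..t} \<subseteq> G" "a \<le> t - s" for t s
    proof -
      have "(G \<inter> {a..t - s}) \<union> {t - s<..t} \<subseteq> G \<inter> {a..t}" using that by auto
      then have "measure lebesgue ((G \<inter> {a..t - s}) \<union> {t - s<..t}) \<le> \<mu> t"
        unfolding \<mu>_def
        by (intro measure_mono_fmeasurable) (auto intro!: lm_open_Icc[OF G(1)] fmeasurableD lm_Ioc)
      moreover have "measure lebesgue ((G \<inter> {a..t - s}) \<union> {t - s<..t}) = \<mu> (t - s) + s"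
      proof -
        have l1: "G \<inter> {a..t - s} \<in> lmeasurable" by (rule lm_open_Icc[OF G(1)])
        have l2: "{t - s<..t} \<in> lmeasurable" by (rule lm_Ioc)
        show ?thesis unfolding \<mu>_def using that
          by (subst measure_Union) (use l1 l2 in \<open>auto simp: fmeasurable_def\<close>)
      qed
      ultimately show ?thesis by simp
    qed
    have \<mu>a: "\<mu> a \<ge> 0" unfolding \<mu>_def by simp
    have \<mu>b: "\<mu> b \<le> measure lebesgue G" unfolding \<mu>_def
      by (intro measure_mono_fmeasurable) (auto intro: G(3) lm_open_Icc[OF G(1)] fmeasurableD)
    define k where "k t = g t - L' * \<mu> t - e * t" for t
    have gc: "continuous_on {a..b} g"
    proof (rule lipschitz_on_continuous_on)
      show "L'-lipschitz_on {a..b} g"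
        using lip' L' by (intro lipschitz_onI) (auto simp: dist_real_def)
    qed
    have \<mu>c: "continuous_on {a..b} \<mu>"
    proof (rule lipschitz_on_continuous_on)
      show "1-lipschitz_on {a..b} \<mu>"
      proof (intro lipschitz_onI)
        fix x y assume "x \<in> {a..b}" "y \<in> {a..b}"
        show "dist (\<mu> x) (\<mu> y) \<le> 1 * dist x y"
          using \<mu>lip[of x y] \<mu>lip[of y x] \<mu>mono[of x y] \<mu>mono[of y x]
          by (cases "x \<le> y") (auto simp: dist_real_def)
      qed simp
    qed
    have kc: "continuous_on {a..b} k" unfolding k_def
      by (intro continuous_intros gc \<mu>c)
    have "k b \<le> k a"
    proof (rule descent_interval[OF ab kc])
      fix t d :: real assume t: "t \<in> {a<..b}" and d: "d > 0"
      show "\<exists>s>0. s < d \<and> k t \<le> k (t - s)"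
      proof (cases "t \<in> G")
        case True
        then obtain r where r: "r > 0" "ball t r \<subseteq> G" using G(1) open_contains_ball by blast
        define s where "s = min (d/2) (min (r/2) ((t - a)/2))"
        have s: "0 < s" "s < d" "s < r" "s < t - a" using d r t unfolding s_def by (auto simp: min_def)
        have sub: "{t - s..t} \<subseteq> G"
        proof
          fix y assume "y \<in> {t - s..t}"
          then have "y \<in> ball t r" using s by (auto simp: dist_real_def)
          then show "y \<in> G" using r by blast
        qed
        have "g t - g (t - s) \<le> L' * s"
          using lip'[of t "t - s"] t s by auto
        moreover have "\<mu> t \<ge> \<mu> (t - s) + s" using \<mu>step[OF s(1) sub] s by simp
        moreover have "L' * s \<le> L' * (\<mu> t - \<mu> (t - s))"
          using L' \<open>\<mu> t \<ge> \<mu> (t - s) + s\<close> by (intro mult_left_mono) auto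
        moreover have "e * s > 0" using e s by simp
        ultimately have "k t \<le> k (t - s)" unfolding k_def by (simp add: algebra_simps)
        then show ?thesis using s by blast
      next
        case False
        then have "t \<notin> N" using G(2) by blast
        then obtain \<delta> where \<delta>: "\<delta> > 0" "\<forall>s. 0 < s \<longrightarrow> s < \<delta> \<longrightarrow> g t - g (t - s) \<le> e * s"
          using good[OF t _ e] by blast
        define s where "s = min (d/2) (\<delta>/2)"
        have s: "0 < s" "s < d" "s < \<delta>" using d \<delta> unfolding s_def by auto
        have "g t - g (t - s) \<le> e * s" using \<delta> s by blast
        moreover have "\<mu> (t - s) \<le> \<mu> t" using \<mu>mono s by simp
        moreover have "L' * (\<mu> (t - s)) \<le> L' * \<mu> t"
          using L' \<open>\<mu> (t - s) \<le> \<mu> t\<close> by (intro mult_left_mono) auto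
        ultimately have "k t \<le> k (t - s)" unfolding k_def by (simp add: algebra_simps)
        then show ?thesis using s by blast
      qed
    qed
    then have "g b \<le> g a + L' * (\<mu> b - \<mu> a) + e * (b - a)" unfolding k_def
      by (simp add: algebra_simps)
    moreover have "L' * (\<mu> b - \<mu> a) \<le> L' * e"
      using \<mu>a \<mu>b G(4) L' by (intro mult_left_mono) auto
    ultimately show ?thesis by simp
  qed
  show ?thesis
  proof (rule field_le_epsilon)
    fix e :: real assume e: "e > 0"
    define e' where "e' = e / (L' + (b - a) + 1)"
    have pos: "L' + (b - a) + 1 > 0" using L' ab by simp
    have e': "e' > 0" using e pos unfolding e'_def by simp
    have "L' * e' + e' * (b - a) = e' * (L' + (b - a))" by (simp add: algebra_simps)
    also have "\<dots> \<le> e' * (L' + (b - a) + 1)" using e' by simp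
    also have "\<dots> = e" unfolding e'_def using pos by simp
    finally show "g b \<le> g a + e" using main[OF e'] by simp
  qed
qed

lemma density_En_negligible:
  fixes A :: "real set" and \<alpha> :: real
  assumes A: "A \<in> sets lebesgue" and \<alpha>: "\<alpha> > 0"
  shows "negligible {t\<in>A. \<forall>d>0. \<exists>s. 0 < s \<and> s < d \<and> measure lebesgue ({t - s..t} - A) > \<alpha> * s}"
    (is "negligible ?E")
  unfolding negligible_outer_le
proof (intro allI impI)
  fix \<delta> :: real assume \<delta>: "\<delta> > 0"
  obtain G where G: "open G" "A \<subseteq> G" "(G - A) \<in> lmeasurable" "emeasure lebesgue (G - A) < ennreal (\<alpha> * \<delta>)"
    using sets_lebesgue_outer_open[OF A, of "\<alpha> * \<delta>"] \<alpha> \<delta> by auto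
  define I where "I = {(t, s). t \<in> ?E \<and> 0 < s \<and> {t - s..t} \<subseteq> G \<and> measure lebesgue ({t - s..t} - A) > \<alpha> * s}"
  define ac where "ac i = fst i - snd i / 2" for i :: "real \<times> real"
  define rr where "rr i = snd i / 2" for i :: "real \<times> real"
  define B where "B i = {fst i - snd i..fst i}" for i :: "real \<times> real"
  have cb: "cball (ac i) (rr i) = B i" for i
    unfolding ac_def rr_def B_def by (simp add: cball_eq_atLeastAtMost)
  have r: "\<And>i. i \<in> I \<Longrightarrow> 0 < rr i" unfolding I_def rr_def by auto
  have S: "\<exists>i. i \<in> I \<and> x \<in> cball (ac i) (rr i) \<and> rr i < d" if x: "x \<in> ?E" and d: "0 < d" for x d
  proof -
    have "x \<in> G" using x G(2) by auto
    then obtain \<rho> where \<rho>: "\<rho> > 0" "ball x \<rho> \<subseteq> G" using G(1) open_contains_ball by blast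
    obtain s where s: "0 < s" "s < min d \<rho>" "measure lebesgue ({x - s..x} - A) > \<alpha> * s"
      using x \<rho> d by (auto dest!: spec[of _ "min d \<rho>"])
    have "{x - s..x} \<subseteq> ball x \<rho>" using s by (auto simp: dist_real_def)
    then have "(x, s) \<in> I" using s x \<rho> unfolding I_def by auto
    moreover have "x \<in> cball (ac (x, s)) (rr (x, s))" using cb[of "(x, s)"] s unfolding B_def by auto
    moreover have "rr (x, s) < d" using s unfolding rr_def by auto
    ultimately show ?thesis by blast
  qed
  obtain C where C: "countable C" "C \<subseteq> I"
     "pairwise (\<lambda>i j. disjnt (cball (ac i) (rr i)) (cball (ac j) (rr j))) C"
     "negligible (?E - (\<Union>i\<in>C. cball (ac i) (rr i)))"
    using Vitali_covering_theorem_cballs[of I rr ?E ac, OF r S] by blast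
  define U where "U = (\<Union>i\<in>C. B i)"
  have Bl: "B i \<in> lmeasurable" for i unfolding B_def by simp
  have disj: "disjoint_family_on B C"
    using C(3) unfolding disjoint_family_on_def pairwise_def disjnt_def cb by blast
  have disj2: "disjoint_family_on (\<lambda>i. B i - A) C"
    using disj unfolding disjoint_family_on_def by blast
  have Usets: "U \<in> sets lebesgue" unfolding U_def
    using C(1) Bl by (intro sets.countable_UN'') auto
  have "emeasure lebesgue U = (\<integral>\<^sup>+i. emeasure lebesgue (B i) \<partial>count_space C)"
    unfolding U_def using Bl C(1) disj by (intro emeasure_UN_countable) auto
  also have "\<dots> \<le> (\<integral>\<^sup>+i. ennreal (1/\<alpha>) * emeasure lebesgue (B i - A) \<partial>count_space C)"
  proof (intro nn_integral_mono)
    fix i assume "i \<in> space (count_space C)"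
    then have iI: "i \<in> I" using C(2) by auto
    then have lt: "\<alpha> * snd i < measure lebesgue (B i - A)" "0 < snd i" unfolding I_def B_def by auto
    have BA: "B i - A \<in> lmeasurable" using Bl A by (intro fmeasurable_Diff) auto
    have "emeasure lebesgue (B i) = ennreal (snd i)"
      using lt unfolding B_def by (simp add: emeasure_eq_measure2)
    also have "\<dots> \<le> ennreal ((1/\<alpha>) * measure lebesgue (B i - A))"
      using lt \<alpha> by (intro ennreal_leI) (simp add: field_simps)
    also have "\<dots> = ennreal (1/\<alpha>) * emeasure lebesgue (B i - A)"
      using \<alpha> BA by (simp only: emeasure_eq_measure2[OF BA]) (rule ennreal_mult, simp_all)
    finally show "emeasure lebesgue (B i) \<le> ennreal (1/\<alpha>) * emeasure lebesgue (B i - A)" .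
  qed
  also have "\<dots> = ennreal (1/\<alpha>) * (\<integral>\<^sup>+i. emeasure lebesgue (B i - A) \<partial>count_space C)"
    by (rule nn_integral_cmult) simp
  also have "(\<integral>\<^sup>+i. emeasure lebesgue (B i - A) \<partial>count_space C) = emeasure lebesgue (\<Union>i\<in>C. B i - A)"
    using Bl C(1) disj2 A by (intro emeasure_UN_countable[symmetric]) auto
  also have "\<dots> \<le> emeasure lebesgue (G - A)"
  proof (rule emeasure_mono)
    have "B i \<subseteq> G" if "i \<in> C" for i
    proof -
      have "i \<in> I" using that C(2) by blast
      then show ?thesis unfolding I_def B_def by (cases i) auto
    qed
    then show "(\<Union>i\<in>C. B i - A) \<subseteq> G - A" by blast
  qed (use G(3) in auto)
  finally have "emeasure lebesgue U \<le> ennreal (1/\<alpha>) * emeasure lebesgue (G - A)"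
    by (simp add: mult_left_mono)
  also have "\<dots> = ennreal ((1/\<alpha>) * measure lebesgue (G - A))"
    using \<alpha> G(3) by (simp only: emeasure_eq_measure2[OF G(3)]) (rule ennreal_mult[symmetric], simp_all)
  also have "\<dots> \<le> ennreal \<delta>"
  proof (rule ennreal_leI)
    have "measure lebesgue (G - A) < \<alpha> * \<delta>"
      using G(3,4) by (simp add: emeasure_eq_measure2 ennreal_less_iff)
    then show "(1/\<alpha>) * measure lebesgue (G - A) \<le> \<delta>" using \<alpha> by (simp add: field_simps)
  qed
  finally have Ule: "emeasure lebesgue U \<le> ennreal \<delta>" .
  have Ul: "U \<in> lmeasurable" using Usets Ule by (intro fmeasurableI) (auto simp: le_less_trans)
  have Um: "measure lebesgue U \<le> \<delta>" using Ul Ule \<delta> by (simp add: emeasure_eq_measure2)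
  have neg: "negligible (?E - U)" using C(4) unfolding U_def cb .
  define T where "T = U \<union> (?E - U)"
  have "?E \<subseteq> T" unfolding T_def by blast
  moreover have Tl: "T \<in> lmeasurable" unfolding T_def using Ul neg
    by (intro fmeasurable.Un) (auto intro: negligible_imp_measurable)
  moreover have "measure lebesgue T \<le> \<delta>"
  proof -
    have "measure lebesgue T \<le> measure lebesgue U + measure lebesgue (?E - U)"
      unfolding T_def using Ul neg by (intro measure_Un_le) (auto intro: negligible_imp_sets)
    then show ?thesis using Um neg by (simp add: negligible_imp_measure0)
  qed
  ultimately show "\<exists>T. ?E \<subseteq> T \<and> T \<in> lmeasurable \<and> measure lebesgue T \<le> \<delta>" by blast
qed

lemma meas_gt: fixes f :: "real \<Rightarrow> real" assumes "f \<in> borel_measurable lebesgue" shows "{x. q < f x} \<in> sets lebesgue"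
  using borel_measurable_iff_greater[of f lebesgue] assms by auto
lemma meas_lt: fixes f :: "real \<Rightarrow> real" assumes "f \<in> borel_measurable lebesgue" shows "{x. f x < q} \<in> sets lebesgue"
  using borel_measurable_iff_less[of f lebesgue] assms by auto
lemma bdd_meas_integrable: fixes f :: "real \<Rightarrow> real" assumes "f \<in> borel_measurable lebesgue" "\<And>t. \<bar>f t\<bar> \<le> M"
  shows "f integrable_on {a..b}"
proof -
  have "f \<in> borel_measurable (lebesgue_on {a..b})" using assms(1) by (simp add: measurable_restrict_space1)
  then have "f absolutely_integrable_on {a..b}"
    by (rule measurable_bounded_by_integrable_imp_absolutely_integrable[where g="\<lambda>_. M"]) (use assms in auto)
  then show ?thesis using set_lebesgue_integral_eq_integral(1) by blast
qed

lemma density_left: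
  fixes A :: "real set" assumes A: "A \<in> sets lebesgue"
  shows "negligible {t\<in>A. \<not> ((\<lambda>s. measure lebesgue ({t - s..t} - A) / s) \<longlongrightarrow> 0) (at_right 0)}"
proof -
  define E where "E n = {t\<in>A. \<forall>d>0. \<exists>s. 0 < s \<and> s < d \<and> measure lebesgue ({t - s..t} - A) > (1 / real (Suc n)) * s}" for n
  have negE: "negligible (E n)" for n unfolding E_def
    by (rule density_En_negligible[OF A]) simp
  have "{t\<in>A. \<not> ((\<lambda>s. measure lebesgue ({t - s..t} - A) / s) \<longlongrightarrow> 0) (at_right 0)} \<subseteq> \<Union>(range E)"
  proof (rule subsetI, rule ccontr)
    fix t assume t: "t \<in> {t\<in>A. \<not> ((\<lambda>s. measure lebesgue ({t - s..t} - A) / s) \<longlongrightarrow> 0) (at_right 0)}"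
      and nt: "t \<notin> \<Union>(range E)"
    have tA: "t \<in> A" using t by simp
    have "((\<lambda>s. measure lebesgue ({t - s..t} - A) / s) \<longlongrightarrow> 0) (at_right 0)"
    proof (rule tendstoI)
      fix \<epsilon> :: real assume \<epsilon>: "\<epsilon> > 0"
      obtain n where n: "inverse (real (Suc n)) < \<epsilon>" using reals_Archimedean[OF \<epsilon>] by blast
      have "t \<notin> E n" using nt by blast
      then have "\<not> (\<forall>d>0. \<exists>s. 0 < s \<and> s < d \<and> measure lebesgue ({t - s..t} - A) > (1 / real (Suc n)) * s)"
        using tA unfolding E_def by blast
      then obtain d where d0: "d > 0" and dd: "\<And>s. 0 < s \<Longrightarrow> s < d \<Longrightarrow> \<not> measure lebesgue ({t - s..t} - A) > (1 / real (Suc n)) * s"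
        by blast
      have d: "d > 0" "\<forall>s. 0 < s \<longrightarrow> s < d \<longrightarrow> measure lebesgue ({t - s..t} - A) \<le> (1 / real (Suc n)) * s"
        using d0 dd not_less by blast+
      show "\<forall>\<^sub>F s in at_right 0. dist (measure lebesgue ({t - s..t} - A) / s) 0 < \<epsilon>"
        unfolding eventually_at_right_field
      proof (intro exI[of _ d] conjI allI impI)
        show "0 < d" by fact
        fix s :: real assume s: "0 < s" "s < d"
        have le: "measure lebesgue ({t - s..t} - A) / s \<le> 1 / real (Suc n)"
          using d s by (simp add: divide_le_eq)
        have "0 \<le> measure lebesgue ({t - s..t} - A) / s" using s by simp
        then show "dist (measure lebesgue ({t - s..t} - A) / s) 0 < \<epsilon>"
          using le n by (simp add: dist_real_def inverse_eq_divide)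
      qed
    qed
    then show False using t by simp
  qed
  moreover have "negligible (\<Union>(range E))" using negE by (intro negligible_countable_Union) auto
  ultimately show ?thesis using negligible_subset by blast
qed

lemma int_lower:
  fixes f :: "real \<Rightarrow> real"
  assumes fm: "f \<in> borel_measurable lebesgue" and M: "\<And>t. \<bar>f t\<bar> \<le> M"
    and s: "s > 0" and A: "A \<in> sets lebesgue" and q: "\<And>\<tau>. \<tau> \<in> A \<Longrightarrow> q \<le> f \<tau>"
  shows "q * s - (M + \<bar>q\<bar>) * measure lebesgue ({t - s..t} - A) \<le> integral {t - s..t} f"
proof -
  let ?I = "{t - s..t}"
  have Il: "(- A) \<inter> ?I \<in> lmeasurable"
    using A by (metis Compl_eq_Diff_UNIV fmeasurable_Diff inf_commute lmeasurable_interval(1) Diff_Int_distrib2 inf_top.right_neutral sets.Diff sets.top space_borel space_completion space_lborel Int_Diff)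
  have ii: "indicat_real (- A) integrable_on ?I" using Il by (simp add: integrable_on_indicator)
  have fi: "f integrable_on ?I" by (rule bdd_meas_integrable[OF fm M])
  have ii2: "(\<lambda>x. (M + \<bar>q\<bar>) * indicat_real (- A) x) integrable_on ?I"
    using integrable_cmul[OF ii, of "M + \<bar>q\<bar>"] by simp
  have "integral ?I (\<lambda>\<tau>. q - (M + \<bar>q\<bar>) * indicat_real (- A) \<tau>) \<le> integral ?I f"
  proof (rule integral_le)
    show "(\<lambda>\<tau>. q - (M + \<bar>q\<bar>) * indicat_real (- A) \<tau>) integrable_on ?I"
      using ii2 by (intro integrable_diff integrable_const_ivl)
    show "f integrable_on ?I" by fact
    fix \<tau> assume "\<tau> \<in> ?I"
    show "q - (M + \<bar>q\<bar>) * indicat_real (- A) \<tau> \<le> f \<tau>"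
    proof (cases "\<tau> \<in> A")
      case True then show ?thesis using q by simp
    next
      case False then show ?thesis using M[of \<tau>] by (simp add: abs_le_iff) linarith
    qed
  qed
  moreover have "integral ?I (\<lambda>\<tau>. q - (M + \<bar>q\<bar>) * indicat_real (- A) \<tau>) = q * s - (M + \<bar>q\<bar>) * measure lebesgue (?I - A)"
  proof -
    have "integral ?I (\<lambda>\<tau>. q - (M + \<bar>q\<bar>) * indicat_real (- A) \<tau>) = integral ?I (\<lambda>\<tau>. q) - integral ?I (\<lambda>\<tau>. (M + \<bar>q\<bar>) * indicat_real (- A) \<tau>)"
      using ii2 by (intro integral_diff) auto
    also have "integral ?I (\<lambda>\<tau>. (M + \<bar>q\<bar>) * indicat_real (- A) \<tau>) = (M + \<bar>q\<bar>) * integral ?I (indicat_real (- A))"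
      by (simp add: integral_mult_right)
    also have "integral ?I (indicat_real (- A)) = measure lebesgue ((- A) \<inter> ?I)"
      using Il by (rule integral_indicator)
    also have "(- A) \<inter> ?I = ?I - A" by blast
    finally show ?thesis using s by simp
  qed
  ultimately show ?thesis by simp
qed

lemma LD_left_real:
  fixes f :: "real \<Rightarrow> real"
  assumes fm: "f \<in> borel_measurable lebesgue" and M: "\<And>t. \<bar>f t\<bar> \<le> M"
  shows "negligible {t. \<not> ((\<lambda>s. integral {t - s..t} f / s) \<longlongrightarrow> f t) (at_right 0)}"
proof -
  define D where "D A = {t\<in>A. \<not> ((\<lambda>s. measure lebesgue ({t - s..t} - A) / s) \<longlongrightarrow> 0) (at_right 0)}" for A
  define Aq where "Aq q = {x. q < f x}" for q
  define Bq where "Bq q = {x. f x < q}" for q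
  have negD: "negligible (D A)" if "A \<in> sets lebesgue" for A unfolding D_def by (rule density_left[OF that])
  have negU: "negligible (\<Union>q\<in>\<rat>. D (Aq q) \<union> D (Bq q))"
  proof (rule negligible_countable_Union)
    show "countable ((\<lambda>q. D (Aq q) \<union> D (Bq q)) ` \<rat>)" using countable_rat by blast
  next
    fix S assume "S \<in> (\<lambda>q. D (Aq q) \<union> D (Bq q)) ` \<rat>"
    then obtain q where "S = D (Aq q) \<union> D (Bq q)" by blast
    moreover have "Aq q \<in> sets lebesgue" "Bq q \<in> sets lebesgue" unfolding Aq_def Bq_def
      using meas_gt[OF fm] meas_lt[OF fm] by auto
    ultimately show "negligible S" using negD by auto
  qed
  have M0: "M \<ge> 0" using M[of 0] by simp
  have "{t. \<not> ((\<lambda>s. integral {t - s..t} f / s) \<longlongrightarrow> f t) (at_right 0)} \<subseteq> (\<Union>q\<in>\<rat>. D (Aq q) \<union> D (Bq q))"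
  proof (rule subsetI, rule ccontr)
    fix t assume t: "t \<in> {t. \<not> ((\<lambda>s. integral {t - s..t} f / s) \<longlongrightarrow> f t) (at_right 0)}"
      and nt: "t \<notin> (\<Union>q\<in>\<rat>. D (Aq q) \<union> D (Bq q))"
    have "((\<lambda>s. integral {t - s..t} f / s) \<longlongrightarrow> f t) (at_right 0)"
    proof (rule tendstoI)
      fix e :: real assume e: "e > 0"
      obtain q1 where q1: "q1 \<in> \<rat>" "f t - e/2 < q1" "q1 < f t" using Rats_dense_in_real[of "f t - e/2" "f t"] e by auto
      obtain q2 where q2: "q2 \<in> \<rat>" "f t < q2" "q2 < f t + e/2" using Rats_dense_in_real[of "f t" "f t + e/2"] e by auto
      have t1: "t \<in> Aq q1" "t \<notin> D (Aq q1)" using q1 nt unfolding Aq_def by auto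
      have t2: "t \<in> Bq q2" "t \<notin> D (Bq q2)" using q2 nt unfolding Bq_def by auto
      have l1: "((\<lambda>s. measure lebesgue ({t - s..t} - Aq q1) / s) \<longlongrightarrow> 0) (at_right 0)"
        using t1 unfolding D_def by auto
      have l2: "((\<lambda>s. measure lebesgue ({t - s..t} - Bq q2) / s) \<longlongrightarrow> 0) (at_right 0)"
        using t2 unfolding D_def by auto
      define K1 where "K1 = M + \<bar>q1\<bar> + 1"
      define K2 where "K2 = M + \<bar>-q2\<bar> + 1"
      have K: "K1 > 0" "K2 > 0" unfolding K1_def K2_def using M0 by auto
      have ev1: "\<forall>\<^sub>F s in at_right 0. measure lebesgue ({t - s..t} - Aq q1) / s < e / (2 * K1)"
        using order_tendstoD(2)[OF l1, of "e / (2 * K1)"] e K by simp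
      have ev2: "\<forall>\<^sub>F s in at_right 0. measure lebesgue ({t - s..t} - Bq q2) / s < e / (2 * K2)"
        using order_tendstoD(2)[OF l2, of "e / (2 * K2)"] e K by simp
      have ev3: "\<forall>\<^sub>F s in at_right 0. (0::real) < s" by (simp add: eventually_at_right_less)
      show "\<forall>\<^sub>F s in at_right 0. dist (integral {t - s..t} f / s) (f t) < e"
        using ev1 ev2 ev3
      proof eventually_elim
        case (elim s)
        have A1: "Aq q1 \<in> sets lebesgue" unfolding Aq_def using meas_gt[OF fm] .
        have B2: "Bq q2 \<in> sets lebesgue" unfolding Bq_def using meas_lt[OF fm] .
        have fm': "(\<lambda>x. - f x) \<in> borel_measurable lebesgue" using fm by measurable
        have low: "q1 * s - (M + \<bar>q1\<bar>) * measure lebesgue ({t - s..t} - Aq q1) \<le> integral {t - s..t} f"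
          by (rule int_lower[OF fm M elim(3) A1]) (auto simp: Aq_def)
        have up: "(- q2) * s - (M + \<bar>-q2\<bar>) * measure lebesgue ({t - s..t} - Bq q2) \<le> integral {t - s..t} (\<lambda>x. - f x)"
          by (rule int_lower[OF fm' _ elim(3) B2]) (auto simp: Bq_def M)
        have m1: "measure lebesgue ({t - s..t} - Aq q1) < s * (e / (2 * K1))"
          using elim(1,3) by (simp add: divide_less_eq mult.commute)
        have m2: "measure lebesgue ({t - s..t} - Bq q2) < s * (e / (2 * K2))"
          using elim(2,3) by (simp add: divide_less_eq mult.commute)
        have "(M + \<bar>q1\<bar>) * measure lebesgue ({t - s..t} - Aq q1) \<le> K1 * measure lebesgue ({t - s..t} - Aq q1)"
          unfolding K1_def by (intro mult_right_mono) auto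
        also have "\<dots> \<le> K1 * (s * (e / (2 * K1)))" using m1 K by (intro mult_left_mono) auto
        also have "\<dots> = s * e / 2" using K by (simp add: field_simps)
        finally have low': "q1 * s - s * e / 2 \<le> integral {t - s..t} f" using low by linarith
        have "(M + \<bar>-q2\<bar>) * measure lebesgue ({t - s..t} - Bq q2) \<le> K2 * measure lebesgue ({t - s..t} - Bq q2)"
          unfolding K2_def by (intro mult_right_mono) auto
        also have "\<dots> \<le> K2 * (s * (e / (2 * K2)))" using m2 K by (intro mult_left_mono) auto
        also have "\<dots> = s * e / 2" using K by (simp add: field_simps)
        finally have up': "integral {t - s..t} f \<le> q2 * s + s * e / 2" using up by (simp add: integral_neg)
        have "(q1 - e/2) * s \<le> integral {t - s..t} f" using low' by (simp add: algebra_simps)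
        then have a: "q1 - e/2 \<le> integral {t - s..t} f / s" using elim(3) by (simp add: le_divide_eq)
        have "integral {t - s..t} f \<le> (q2 + e/2) * s" using up' by (simp add: algebra_simps)
        then have b: "integral {t - s..t} f / s \<le> q2 + e/2" using elim(3) by (simp add: divide_le_eq)
        show ?case using a b q1 q2 by (simp add: dist_real_def abs_less_iff)
      qed
    qed
    then show False using t by simp
  qed
  then show ?thesis using negU negligible_subset by blast
qed

lemma LD_traj:
  fixes w :: "real \<Rightarrow> 'a::euclidean_space"
  assumes ai: "\<And>T. T \<ge> 0 \<Longrightarrow> w absolutely_integrable_on {0..T}"
    and bd: "\<And>\<tau>. \<tau> \<ge> 0 \<Longrightarrow> norm (w \<tau>) \<le> M"
  shows "negligible {t. t > 0 \<and> \<not> ((\<lambda>s. integral {t - s..t} w /\<^sub>R s) \<longlongrightarrow> w t) (at_right 0)}"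
proof -
  have M0: "M \<ge> 0" using bd[of 0] norm_ge_zero order_trans by blast
  define g where "g n i \<tau> = indicator {0..real n} \<tau> * (w \<tau> \<bullet> i)" for n :: nat and i :: 'a and \<tau> :: real
  have gm: "g n i \<in> borel_measurable lebesgue" for n i
  proof -
    have "integrable lebesgue (\<lambda>\<tau>. indicator {0..real n} \<tau> *\<^sub>R w \<tau>)"
      using ai[of "real n"] unfolding set_integrable_def by simp
    then have "(\<lambda>\<tau>. indicator {0..real n} \<tau> *\<^sub>R w \<tau>) \<in> borel_measurable lebesgue" by (rule borel_measurable_integrable)
    then have "(\<lambda>\<tau>. (indicator {0..real n} \<tau> *\<^sub>R w \<tau>) \<bullet> i) \<in> borel_measurable lebesgue" by measurable
    moreover have "(\<lambda>\<tau>. (indicator {0..real n} \<tau> *\<^sub>R w \<tau>) \<bullet> i) = g n i"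
      unfolding g_def by (auto simp: fun_eq_iff)
    ultimately show ?thesis by simp
  qed
  have gb: "\<bar>g n i \<tau>\<bar> \<le> M" if "i \<in> Basis" for n i \<tau>
  proof (cases "\<tau> \<in> {0..real n}")
    case True
    then have "\<bar>w \<tau> \<bullet> i\<bar> \<le> norm (w \<tau>)" using that by (simp add: Basis_le_norm)
    then show ?thesis using True bd[of \<tau>] unfolding g_def by auto
  next
    case False then show ?thesis unfolding g_def using M0 by simp
  qed
  define Bad where "Bad n i = {t. \<not> ((\<lambda>s. integral {t - s..t} (g n i) / s) \<longlongrightarrow> g n i t) (at_right 0)}" for n i
  have negB: "negligible (Bad n i)" if "i \<in> Basis" for n i
    unfolding Bad_def by (rule LD_left_real[OF gm gb[OF that]])
  have negU: "negligible (\<Union>n. \<Union>i\<in>Basis. Bad n i)"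
    using negB by (intro negligible_countable_Union) auto
  have "{t. t > 0 \<and> \<not> ((\<lambda>s. integral {t - s..t} w /\<^sub>R s) \<longlongrightarrow> w t) (at_right 0)} \<subseteq> (\<Union>n. \<Union>i\<in>Basis. Bad n i)"
  proof (rule subsetI, rule ccontr)
    fix t assume t: "t \<in> {t. t > 0 \<and> \<not> ((\<lambda>s. integral {t - s..t} w /\<^sub>R s) \<longlongrightarrow> w t) (at_right 0)}"
      and nt: "t \<notin> (\<Union>n. \<Union>i\<in>Basis. Bad n i)"
    have t0: "t > 0" using t by simp
    obtain n :: nat where n: "t < real n" using reals_Archimedean2 by blast
    have "((\<lambda>s. integral {t - s..t} w /\<^sub>R s) \<longlongrightarrow> w t) (at_right 0)"
    proof (subst tendsto_componentwise_iff, intro ballI)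
      fix i :: 'a assume i: "i \<in> Basis"
      have lim: "((\<lambda>s. integral {t - s..t} (g n i) / s) \<longlongrightarrow> g n i t) (at_right 0)"
        using nt i unfolding Bad_def by blast
      have gt: "g n i t = w t \<bullet> i" unfolding g_def using t0 n by simp
      have ev: "\<forall>\<^sub>F s in at_right 0. integral {t - s..t} (g n i) / s = (integral {t - s..t} w /\<^sub>R s) \<bullet> i"
        unfolding eventually_at_right_field
      proof (intro exI[of _ t] conjI allI impI)
        show "(0::real) < t" by fact
        fix s :: real assume s: "0 < s" "s < t"
        have sub: "{t - s..t} \<subseteq> {0..real n}" using s n by auto
        have "integral {t - s..t} (g n i) = integral {t - s..t} (\<lambda>\<tau>. w \<tau> \<bullet> i)"
        proof (rule integral_cong)
          fix x assume "x \<in> {t - s..t}"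
          then have "x \<in> {0..real n}" using sub by blast
          then show "g n i x = w x \<bullet> i" unfolding g_def by simp
        qed
        also have "\<dots> = integral {t - s..t} w \<bullet> i"
        proof (rule integral_component_eq)
          have "w absolutely_integrable_on {0..t}" using ai[of t] t0 by simp
          then have "w integrable_on {0..t}" by (rule set_lebesgue_integral_eq_integral(1))
          then show "w integrable_on {t - s..t}" by (rule integrable_subinterval_real) (use s in auto)
        qed
        finally show "integral {t - s..t} (g n i) / s = (integral {t - s..t} w /\<^sub>R s) \<bullet> i"
          by (simp add: divide_inverse mult.commute)
      qed
      show "((\<lambda>s. (integral {t - s..t} w /\<^sub>R s) \<bullet> i) \<longlongrightarrow> w t \<bullet> i) (at_right 0)"
        using tendsto_cong[OF ev] lim gt by simp
    qed
    then show False using t by simp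
  qed
  then show ?thesis using negU negligible_subset by blast
qed

lemma deriv_mono:
  fixes K :: "'a::euclidean_space set" and F :: "'a \<Rightarrow> 'a"
  assumes cvx: "convex K" and y: "y \<in> K" and z: "z \<in> K"
    and dF: "(F has_derivative blinfun_apply F'y) (at y)"
    and mono: "\<And>x y. x \<in> K \<Longrightarrow> y \<in> K \<Longrightarrow> (x - y) \<bullet> (F x - F y) \<ge> c * (norm (x - y))\<^sup>2"
    and c: "c > 0"
  shows "0 \<le> (z - y) \<bullet> blinfun_apply F'y (z - y)"
proof (rule ccontr)
  define h where "h = z - y"
  assume "\<not> 0 \<le> (z - y) \<bullet> blinfun_apply F'y (z - y)"
  then have neg: "h \<bullet> blinfun_apply F'y h < 0" unfolding h_def by simp
  have d1: "((\<lambda>l. y + l *\<^sub>R h) has_derivative (\<lambda>u. u *\<^sub>R h)) (at 0)"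
    by (auto intro!: derivative_eq_intros)
  have d2: "(F has_derivative blinfun_apply F'y) (at ((\<lambda>l. y + l *\<^sub>R h) 0))" using dF by simp
  have d3: "((\<lambda>l. F (y + l *\<^sub>R h)) has_derivative (\<lambda>u. blinfun_apply F'y (u *\<^sub>R h))) (at 0)"
    using has_derivative_compose[OF d1 d2] by simp
  have d4: "((\<lambda>l. h \<bullet> F (y + l *\<^sub>R h)) has_derivative (\<lambda>u. h \<bullet> blinfun_apply F'y (u *\<^sub>R h))) (at 0)"
    using has_derivative_inner_right[OF d3] by simp
  have "((\<lambda>l. h \<bullet> F (y + l *\<^sub>R h)) has_real_derivative (h \<bullet> blinfun_apply F'y h)) (at 0)"
    unfolding has_field_derivative_def
    by (rule has_derivative_eq_rhs[OF d4]) (simp add: fun_eq_iff blinfun.scaleR_right)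
  from DERIV_neg_dec_right[OF this neg] obtain d where d: "d > 0"
    "\<forall>l>0. l < d \<longrightarrow> h \<bullet> F (y + 0 *\<^sub>R h) > h \<bullet> F (y + (0 + l) *\<^sub>R h)" by blast
  define l where "l = min (d/2) 1"
  have l: "0 < l" "l < d" "l \<le> 1" using d unfolding l_def by auto
  have lt: "h \<bullet> F (y + l *\<^sub>R h) < h \<bullet> F y" using d l by auto
  have yl: "y + l *\<^sub>R h \<in> K"
  proof -
    have "(1 - l) *\<^sub>R y + l *\<^sub>R z \<in> K" using cvx y z l unfolding convex_def by auto
    moreover have "(1 - l) *\<^sub>R y + l *\<^sub>R z = y + l *\<^sub>R h" unfolding h_def by (simp add: algebra_simps)
    ultimately show ?thesis by simp
  qed
  have "c * (norm ((y + l *\<^sub>R h) - y))\<^sup>2 \<le> ((y + l *\<^sub>R h) - y) \<bullet> (F (y + l *\<^sub>R h) - F y)"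
    using mono[OF yl y] .
  then have "0 \<le> l * (h \<bullet> (F (y + l *\<^sub>R h) - F y))" using c
    by (smt (verit, best) add_diff_cancel_left' inner_scaleR_left mult_nonneg_nonneg zero_le_power2)
  then have "0 \<le> h \<bullet> (F (y + l *\<^sub>R h) - F y)" using l by (simp add: zero_le_mult_iff)
  then show False using lt by (simp add: inner_diff_right)
qed

lemma static_facts:
  fixes K :: "'a::euclidean_space set" and F :: "'a \<Rightarrow> 'a" and F' :: "'a \<Rightarrow> ('a \<Rightarrow>\<^sub>L 'a)"
  assumes "K \<noteq> {}" and cK: "compact K" and cvx: "convex K"
    and "open U" and KU: "K \<subseteq> U" and dF: "\<And>x. x \<in> U \<Longrightarrow> (F has_derivative blinfun_apply (F' x)) (at x)"
    and cF': "continuous_on U F'"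
    and c: "c > 0" and mono: "\<And>x y. x \<in> K \<Longrightarrow> y \<in> K \<Longrightarrow> (x - y) \<bullet> (F x - F y) \<ge> c * (norm (x - y))\<^sup>2"
  shows "\<exists>R MF LF. R \<ge> 1 \<and> MF \<ge> 0 \<and> LF \<ge> 0 \<and> (\<forall>y\<in>K. norm y \<le> R) \<and> (\<forall>y\<in>K. norm (F y) \<le> MF)
     \<and> (\<forall>y\<in>K. \<forall>z\<in>K. norm (F y - F z) \<le> LF * norm (y - z))
     \<and> (\<forall>y\<in>K. norm (F' y) \<le> LF)
     \<and> (\<forall>y\<in>K. \<forall>z\<in>K. 0 \<le> (z - y) \<bullet> blinfun_apply (F' y) (z - y))"
proof -
  obtain R0 where R0: "\<forall>y\<in>K. norm y \<le> R0" using compact_imp_bounded[OF cK] bounded_iff by blast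
  define R where "R = max R0 1"
  have R: "R \<ge> 1" "\<forall>y\<in>K. norm y \<le> R" using R0 unfolding R_def by force+
  have Fc: "continuous_on K F"
  proof -
    have "continuous_on U F" using dF has_derivative_continuous continuous_at_imp_continuous_on by blast
    then show ?thesis using KU continuous_on_subset by blast
  qed
  have "bounded (F ` K)" using compact_imp_bounded[OF compact_continuous_image[OF Fc cK]] .
  then obtain MF0 where MF0: "\<forall>y\<in>K. norm (F y) \<le> MF0" unfolding bounded_iff by auto
  define MF where "MF = max MF0 0"
  have MF: "MF \<ge> 0" "\<forall>y\<in>K. norm (F y) \<le> MF" using MF0 unfolding MF_def by force+
  have F'c: "continuous_on K F'" using cF' KU continuous_on_subset by blast
  have "bounded (F' ` K)" using compact_imp_bounded[OF compact_continuous_image[OF F'c cK]] .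
  then obtain LF0 where LF0: "\<forall>y\<in>K. norm (F' y) \<le> LF0" unfolding bounded_iff by auto
  define LF where "LF = max LF0 0"
  have LF: "LF \<ge> 0" "\<forall>y\<in>K. norm (F' y) \<le> LF" using LF0 unfolding LF_def by force+
  have lip: "\<forall>y\<in>K. \<forall>z\<in>K. norm (F y - F z) \<le> LF * norm (y - z)"
  proof (intro ballI)
    fix y z assume y: "y \<in> K" and z: "z \<in> K"
    show "norm (F y - F z) \<le> LF * norm (y - z)"
    proof (rule differentiable_bound[OF cvx _ _ y z])
      fix x assume x: "x \<in> K"
      show "(F has_derivative blinfun_apply (F' x)) (at x within K)"
        using dF[of x] x KU has_derivative_at_withinI by blast
      show "onorm (blinfun_apply (F' x)) \<le> LF" using LF x by (simp add: norm_blinfun.rep_eq[symmetric])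
    qed
  qed
  have dm: "\<forall>y\<in>K. \<forall>z\<in>K. 0 \<le> (z - y) \<bullet> blinfun_apply (F' y) (z - y)"
    using deriv_mono[OF cvx _ _ dF mono c] KU by blast
  show ?thesis using R MF LF lip dm by blast
qed

lemma best_resp_nonempty:
  fixes K :: "'a::euclidean_space set"
  assumes "K \<noteq> {}" "compact K"
  shows "\<exists>y. y \<in> best_resp K p"
proof -
  have "continuous_on K (\<lambda>y. y \<bullet> p)" by (intro continuous_intros)
  then obtain y where "y \<in> K" "\<forall>z\<in>K. y \<bullet> p \<le> z \<bullet> p"
    using continuous_attains_inf[OF assms(2) assms(1)] by blast
  then show ?thesis unfolding best_resp_def by blast
qed

lemma tendsto_left_shift:
  fixes f :: "real \<Rightarrow> 'b::topological_space"
  assumes "(f \<longlongrightarrow> l) (at t within S)" and "\<forall>\<^sub>F s in at_right 0. t - s \<in> S"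
  shows "((\<lambda>s. f (t - s)) \<longlongrightarrow> l) (at_right 0)"
proof -
  have "filterlim (\<lambda>s. t - s) (at t within S) (at_right (0::real))"
    unfolding filterlim_at
  proof
    show "\<forall>\<^sub>F s in at_right 0. t - s \<in> S \<and> t - s \<noteq> t"
      using assms(2) eventually_at_right_less[of "0::real"] by eventually_elim auto
    have "((\<lambda>s. t - s) \<longlongrightarrow> t - 0) (at_right (0::real))"
      by (intro tendsto_intros) 
    then show "((\<lambda>s. t - s) \<longlongrightarrow> t) (at_right (0::real))" by simp
  qed
  then show ?thesis using filterlim_compose[OF assms(1)] by blast
qed

lemma exp_lip:
  fixes \<tau> \<tau>' t :: real
  assumes "\<tau> \<le> t" "\<tau>' \<le> t"
  shows "\<bar>exp \<tau> - exp \<tau>'\<bar> \<le> exp t * \<bar>\<tau> - \<tau>'\<bar>"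
proof -
  have *: "\<bar>exp u - exp u'\<bar> \<le> exp t * \<bar>u - u'\<bar>" if "u' < u" "u \<le> t" for u u'
  proof -
    obtain z where z: "u' < z" "z < u" "exp u - exp u' = (u - u') * exp z"
      using MVT2[OF \<open>u' < u\<close>, of exp exp] by (auto intro: DERIV_exp)
    have "exp z \<le> exp t" using z that by simp
    then have "(u - u') * exp z \<le> (u - u') * exp t" using that by (intro mult_left_mono) auto
    then show ?thesis using z that by (simp add: mult.commute)
  qed
  show ?thesis
  proof (cases "\<tau>' < \<tau>")
    case True then show ?thesis using *[OF True assms(1)] by simp
  next
    case False
    show ?thesis
    proof (cases "\<tau> < \<tau>'")
      case True then show ?thesis using *[OF True assms(2)] by (simp add: abs_minus_commute)
    next
      case False then show ?thesis using \<open>\<not> \<tau>' < \<tau>\<close> by simp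
    qed
  qed
qed

lemma vd_lip:
  fixes Dl :: "real \<Rightarrow> 'a::euclidean_space"
  assumes d: "\<forall>t\<ge>0. (Dl has_vector_derivative Dl' t) (at t within {0..})"
    and b: "\<forall>t\<ge>0. norm (Dl' t) \<le> B"
    and "\<tau> \<ge> 0" "\<tau>' \<ge> 0"
  shows "norm (Dl \<tau> - Dl \<tau>') \<le> B * \<bar>\<tau> - \<tau>'\<bar>"
proof -
  have "norm (Dl \<tau> - Dl \<tau>') \<le> B * norm (\<tau> - \<tau>')"
  proof (rule differentiable_bound[where S="{0..}" and f'="\<lambda>t h. h *\<^sub>R Dl' t"])
    show "convex {0::real..}" by (rule convex_real_interval)
    fix x :: real assume x: "x \<in> {0..}"
    show "(Dl has_derivative (\<lambda>h. h *\<^sub>R Dl' x)) (at x within {0..})"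
      using d x unfolding has_vector_derivative_def by auto
    have "onorm (\<lambda>h::real. h *\<^sub>R Dl' x) = onorm (\<lambda>h::real. h) * norm (Dl' x)"
      by (rule onorm_scaleR_left) (rule bounded_linear_ident)
    also have "\<dots> = norm (Dl' x)" by (simp add: onorm_id)
    finally show "onorm (\<lambda>h. h *\<^sub>R Dl' x) \<le> B" using b x by simp
  qed (use assms in auto)
  then show ?thesis by simp
qed

lemma traj_core:
  fixes K :: "'a::euclidean_space set" and F :: "'a \<Rightarrow> 'a" and F' :: "'a \<Rightarrow> ('a \<Rightarrow>\<^sub>L 'a)"
    and c :: real and xs :: 'a and x eps Dl Dl' :: "real \<Rightarrow> 'a"
  assumes Kne: "K \<noteq> {}" and cK: "compact K"
    and dF: "\<And>y. y \<in> K \<Longrightarrow> (F has_derivative blinfun_apply (F' y)) (at y)"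
    and c: "c > 0" and mono: "\<And>x y. x \<in> K \<Longrightarrow> y \<in> K \<Longrightarrow> (x - y) \<bullet> (F x - F y) \<ge> c * (norm (x - y))\<^sup>2"
    and VI: "VI_sol K F xs"
    and R: "R \<ge> 1" "\<forall>y\<in>K. norm y \<le> R"
    and MF: "MF \<ge> 0" "\<forall>y\<in>K. norm (F y) \<le> MF"
    and LF: "LF \<ge> 0" "\<forall>y\<in>K. \<forall>z\<in>K. norm (F y - F z) \<le> LF * norm (y - z)" "\<forall>y\<in>K. norm (F' y) \<le> LF"
    and dm: "\<forall>y\<in>K. \<forall>z\<in>K. 0 \<le> (z - y) \<bullet> blinfun_apply (F' y) (z - y)"
    and adm: "admissible K eps x"
    and bDl: "bounded (Dl ` {0..})"
    and dDl: "\<forall>t\<ge>0. (Dl has_vector_derivative Dl' t) (at t within {0..})"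
    and bDl': "bounded (Dl' ` {0..})"
    and sol: "BR_solution K F eps Dl x"
  shows "\<exists>W. (\<forall>t\<ge>0. c * (norm (x t - xs))\<^sup>2 \<le> W t + 2 * R * norm (Dl t))
           \<and> (W 0 \<le> (MF + 2 * R * LF) * norm (x 0 - xs) + 2 * R * norm (Dl 0))
           \<and> (\<forall>t\<ge>0. 0 \<le> W t \<and> W t \<le> 2 * R * (MF + norm (Dl t)))
           \<and> (\<forall>a t Q. 0 \<le> a \<longrightarrow> a \<le> t \<longrightarrow> 0 \<le> Q \<longrightarrow>
                 (\<forall>\<tau>\<in>{a<..t}. norm (eps \<tau>) * (2 * R * LF + MF + norm (Dl \<tau>)) + 2 * R * norm (Dl' \<tau>) \<le> Q)
                 \<longrightarrow> W t \<le> exp (-(t - a)) * W a + Q)"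
proof -
  obtain v where v1: "\<forall>t\<ge>0. v absolutely_integrable_on {0..t} \<and> (v has_integral (x t - x 0)) {0..t}"
    and v2: "AE s in lebesgue. s \<ge> 0 \<longrightarrow> v s \<in> (\<lambda>y. y - x s + eps s) ` best_resp K (F (x s) + Dl s)"
    using sol unfolding BR_solution_def by blast
  define P where "P s \<longleftrightarrow> (s \<ge> 0 \<longrightarrow> v s \<in> (\<lambda>y. y - x s + eps s) ` best_resp K (F (x s) + Dl s))" for s
  define N0 where "N0 = {s. \<not> P s}"
  have negN0: "negligible N0"
  proof -
    obtain N where N: "N \<in> null_sets lebesgue" "{s \<in> space lebesgue. \<not> P s} \<subseteq> N"
      using v2 unfolding P_def eventually_ae_filter by blast
    have "N0 \<subseteq> N" using N(2) unfolding N0_def by auto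
    moreover have "negligible N" using N(1) by (simp add: negligible_iff_null_sets)
    ultimately show ?thesis using negligible_subset by blast
  qed
  have xK: "x t \<in> K" if "t \<ge> 0" for t using adm that unfolding admissible_def by auto
  obtain E where E: "E \<ge> 0" "\<forall>t\<ge>0. norm (eps t) \<le> E"
  proof -
    have "bounded (eps ` {0..})" using adm unfolding admissible_def by auto
    then obtain E0 where "\<forall>t\<ge>0. norm (eps t) \<le> E0" unfolding bounded_iff by auto
    then show ?thesis using that[of "max E0 0"] by force
  qed
  obtain DB where DB: "DB \<ge> 0" "\<forall>t\<ge>0. norm (Dl t) \<le> DB"
  proof -
    obtain E0 where "\<forall>t\<ge>0. norm (Dl t) \<le> E0" using bDl unfolding bounded_iff by auto
    then show ?thesis using that[of "max E0 0"] by force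
  qed
  obtain DB' where DB': "DB' \<ge> 0" "\<forall>t\<ge>0. norm (Dl' t) \<le> DB'"
  proof -
    obtain E0 where "\<forall>t\<ge>0. norm (Dl' t) \<le> E0" using bDl' unfolding bounded_iff by auto
    then show ?thesis using that[of "max E0 0"] by force
  qed
  define bsel where "bsel p = (SOME y. y \<in> best_resp K p)" for p
  have bs: "bsel p \<in> best_resp K p" for p
    unfolding bsel_def using best_resp_nonempty[OF Kne cK] by (rule someI_ex)
  have bK: "bsel p \<in> K" for p using bs[of p] unfolding best_resp_def by auto
  have bmin: "bsel p \<bullet> p \<le> z \<bullet> p" if "z \<in> K" for p z using bs[of p] that unfolding best_resp_def by auto
  have breq: "y \<bullet> p = bsel p \<bullet> p" if "y \<in> best_resp K p" for y p
  proof -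
    have "y \<in> K" "\<forall>z\<in>K. y \<bullet> p \<le> z \<bullet> p" using that unfolding best_resp_def by auto
    moreover have "bsel p \<in> K" "\<forall>z\<in>K. bsel p \<bullet> p \<le> z \<bullet> p" using bs[of p] unfolding best_resp_def by auto
    ultimately show ?thesis by (meson order_antisym)
  qed
  define \<pi> where "\<pi> t = F (x t) + Dl t" for t
  define b where "b t = (if t \<in> N0 then bsel (\<pi> t) else v t + x t - eps t)" for t
  have bb: "b t \<in> best_resp K (\<pi> t)" if tt: "t \<ge> 0" for t
  proof (cases "t \<in> N0")
    case True then show ?thesis unfolding b_def using bs by simp
  next
    case False
    then have "P t" unfolding N0_def by simp
    then obtain y where y: "y \<in> best_resp K (\<pi> t)" "v t = y - x t + eps t"
      using tt unfolding P_def \<pi>_def by auto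
    then show ?thesis using False unfolding b_def by simp
  qed
  have bK2: "b t \<in> K" if "t \<ge> 0" for t using bb[OF that] unfolding best_resp_def by auto
  define w where "w t = b t - x t + eps t" for t
  have wv: "w t = v t" if "t \<in> {0..T} - N0" for t T
  proof -
    have "t \<notin> N0" using that by auto
    then show ?thesis unfolding w_def b_def by simp
  qed
  have wint: "(w has_integral (x T - x 0)) {0..T}" if "T \<ge> 0" for T
    using has_integral_spike[OF negN0 _ conjunct2[OF v1[rule_format, OF that]]] wv by blast
  have wai: "w absolutely_integrable_on {0..T}" if "T \<ge> 0" for T
    using absolutely_integrable_spike[OF conjunct1[OF v1[rule_format, OF that]] negN0] wv by blast
  define Mw where "Mw = 2 * R + E"
  have Mw0: "Mw \<ge> 0" unfolding Mw_def using R E by simp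
  have nKK: "norm (y - z) \<le> 2 * R" if "y \<in> K" "z \<in> K" for y z
  proof -
    have "norm (y - z) \<le> norm y + norm z" by (rule norm_triangle_ineq4)
    moreover have "norm y \<le> R" "norm z \<le> R" using R that by auto
    ultimately show ?thesis by linarith
  qed
  have wb: "norm (w t) \<le> Mw" if "t \<ge> 0" for t
  proof -
    have "norm (w t) \<le> norm (b t - x t) + norm (eps t)" unfolding w_def by (rule norm_triangle_ineq)
    moreover have "norm (b t - x t) \<le> 2 * R" using nKK[OF bK2[OF that] xK[OF that]] .
    moreover have "norm (eps t) \<le> E" using E that by auto
    ultimately show ?thesis unfolding Mw_def by linarith
  qed
  have xdiff: "x t - x t' = integral {t'..t} w" if "0 \<le> t'" "t' \<le> t" for t t'
  proof -
    have t0: "0 \<le> t" using that by linarith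
    have hi: "(w has_integral (x t - x 0)) {0..t}" by (rule wint[OF t0])
    have hi': "(w has_integral (x t' - x 0)) {0..t'}" by (rule wint[OF that(1)])
    have wi: "w integrable_on {0..t}" using hi by (rule has_integral_integrable)
    have "integral {0..t'} w + integral {t'..t} w = integral {0..t} w"
      using Henstock_Kurzweil_Integration.integral_combine[OF that wi] .
    moreover have "integral {0..t} w = x t - x 0" using hi by (rule integral_unique)
    moreover have "integral {0..t'} w = x t' - x 0" using hi' by (rule integral_unique)
    ultimately show ?thesis by (simp add: algebra_simps)
  qed
  have xlip: "norm (x t - x t') \<le> Mw * (t - t')" if "0 \<le> t'" "t' \<le> t" for t t'
  proof -
    have t0: "0 \<le> t" using that by linarith
    have "w integrable_on {0..t}" using wint[OF t0] by (rule has_integral_integrable)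
    then have wi: "w integrable_on {t'..t}"
      by (rule integrable_subinterval_real) (use that in auto)
    have "norm (integral {t'..t} w) \<le> Mw * Henstock_Kurzweil_Integration.content {t'..t}"
      by (rule has_integral_bound_real[OF Mw0, of "{}"]) (use wi wb that in auto)
    then show ?thesis using xdiff[OF that] that by simp
  qed
  have xlip2: "norm (x t - x t') \<le> Mw * \<bar>t - t'\<bar>" if "0 \<le> t" "0 \<le> t'" for t t'
  proof (cases "t' \<le> t")
    case True then show ?thesis using xlip[OF that(2) True] by simp
  next
    case False then show ?thesis using xlip[OF that(1), of t'] by (simp add: norm_minus_commute)
  qed
  define W where "W t = (x t - bsel (\<pi> t)) \<bullet> \<pi> t" for t
  have \<pi>b: "norm (\<pi> t) \<le> MF + norm (Dl t)" if "t \<ge> 0" for t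
  proof -
    have "norm (F (x t)) \<le> MF" using MF xK[OF that] by auto
    then show ?thesis unfolding \<pi>_def using norm_triangle_ineq[of "F (x t)" "Dl t"] by linarith
  qed
  have Wge: "(x t - y) \<bullet> \<pi> t \<le> W t" if "y \<in> K" for t y
    unfolding W_def using bmin[OF that, of "\<pi> t"] by (simp add: inner_diff_left)
  have Weq: "W t = (x t - b t) \<bullet> \<pi> t" if "t \<ge> 0" for t
    unfolding W_def using breq[OF bb[OF that]] by (simp add: inner_diff_left)
  have W0: "0 \<le> W t" if "t \<ge> 0" for t using Wge[OF xK[OF that], of t] by simp
  have Wup: "W t \<le> 2 * R * (MF + norm (Dl t))" if "t \<ge> 0" for t
  proof -
    have "W t \<le> norm (x t - bsel (\<pi> t)) * norm (\<pi> t)" unfolding W_def by (rule norm_cauchy_schwarz)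
    also have "\<dots> \<le> 2 * R * (MF + norm (Dl t))"
      using nKK[OF xK[OF that] bK] \<pi>b[OF that] R by (intro mult_mono) auto
    finally show ?thesis .
  qed
  have part1: "c * (norm (x t - xs))\<^sup>2 \<le> W t + 2 * R * norm (Dl t)" if "t \<ge> 0" for t
  proof -
    have xsK: "xs \<in> K" and vi: "\<forall>y\<in>K. (y - xs) \<bullet> F xs \<ge> 0" using VI unfolding VI_sol_def by auto
    have "(x t - xs) \<bullet> \<pi> t = (x t - xs) \<bullet> (F (x t) - F xs) + (x t - xs) \<bullet> F xs + (x t - xs) \<bullet> Dl t"
      unfolding \<pi>_def by (simp add: inner_diff_right inner_add_right)
    moreover have "c * (norm (x t - xs))\<^sup>2 \<le> (x t - xs) \<bullet> (F (x t) - F xs)" using mono[OF xK[OF that] xsK] .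
    moreover have "0 \<le> (x t - xs) \<bullet> F xs" using vi xK[OF that] by auto
    moreover have "- (2 * R * norm (Dl t)) \<le> (x t - xs) \<bullet> Dl t"
    proof -
      have "\<bar>(x t - xs) \<bullet> Dl t\<bar> \<le> norm (x t - xs) * norm (Dl t)" by (rule Cauchy_Schwarz_ineq2)
      also have "\<dots> \<le> 2 * R * norm (Dl t)" using nKK[OF xK[OF that] xsK] by (intro mult_right_mono) auto
      finally show ?thesis by linarith
    qed
    moreover have "(x t - xs) \<bullet> \<pi> t \<le> W t" using Wge[OF xsK] .
    ultimately show ?thesis by linarith
  qed
  have part2: "W 0 \<le> (MF + 2 * R * LF) * norm (x 0 - xs) + 2 * R * norm (Dl 0)"
  proof -
    have xsK: "xs \<in> K" and vi: "\<forall>y\<in>K. (y - xs) \<bullet> F xs \<ge> 0" using VI unfolding VI_sol_def by auto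
    define b0 where "b0 = bsel (\<pi> 0)"
    have b0K: "b0 \<in> K" unfolding b0_def by (rule bK)
    have x0K: "x 0 \<in> K" using xK by simp
    have "W 0 = (x 0 - xs) \<bullet> F (x 0) + (xs - b0) \<bullet> (F (x 0) - F xs) + (xs - b0) \<bullet> F xs + (x 0 - b0) \<bullet> Dl 0"
      unfolding W_def b0_def \<pi>_def by (simp add: inner_diff_left inner_diff_right inner_add_right)
    moreover have "(x 0 - xs) \<bullet> F (x 0) \<le> MF * norm (x 0 - xs)"
    proof -
      have "(x 0 - xs) \<bullet> F (x 0) \<le> norm (x 0 - xs) * norm (F (x 0))" by (rule norm_cauchy_schwarz)
      also have "\<dots> \<le> norm (x 0 - xs) * MF" using MF x0K by (intro mult_left_mono) auto
      finally show ?thesis by (simp add: mult.commute)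
    qed
    moreover have "(xs - b0) \<bullet> (F (x 0) - F xs) \<le> 2 * R * LF * norm (x 0 - xs)"
    proof -
      have "(xs - b0) \<bullet> (F (x 0) - F xs) \<le> norm (xs - b0) * norm (F (x 0) - F xs)" by (rule norm_cauchy_schwarz)
      also have "\<dots> \<le> (2 * R) * (LF * norm (x 0 - xs))"
        using nKK[OF xsK b0K] LF x0K xsK R by (intro mult_mono) auto
      finally show ?thesis by (simp add: mult.assoc)
    qed
    moreover have "(xs - b0) \<bullet> F xs \<le> 0" using vi b0K
      by (metis inner_minus_left minus_diff_eq neg_le_0_iff_le)
    moreover have "(x 0 - b0) \<bullet> Dl 0 \<le> 2 * R * norm (Dl 0)"
    proof -
      have "(x 0 - b0) \<bullet> Dl 0 \<le> norm (x 0 - b0) * norm (Dl 0)" by (rule norm_cauchy_schwarz)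
      also have "\<dots> \<le> 2 * R * norm (Dl 0)" using nKK[OF x0K b0K] by (intro mult_right_mono) auto
      finally show ?thesis .
    qed
    ultimately show ?thesis by (simp add: algebra_simps)
  qed

  have R0: "R \<ge> 0" using R by simp
  have ip: "\<bar>y \<bullet> q\<bar> \<le> R * norm q" if "y \<in> K" for y q
  proof -
    have "\<bar>y \<bullet> q\<bar> \<le> norm y * norm q" by (rule Cauchy_Schwarz_ineq2)
    also have "\<dots> \<le> R * norm q" using R that by (intro mult_right_mono) auto
    finally show ?thesis .
  qed
  have Dlip: "norm (Dl \<tau> - Dl \<tau>') \<le> DB' * \<bar>\<tau> - \<tau>'\<bar>" if "\<tau> \<ge> 0" "\<tau>' \<ge> 0" for \<tau> \<tau>'
    by (rule vd_lip[OF dDl DB'(2) that])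
  have \<pi>lip: "norm (\<pi> \<tau> - \<pi> \<tau>') \<le> (LF * Mw + DB') * \<bar>\<tau> - \<tau>'\<bar>" if "\<tau> \<ge> 0" "\<tau>' \<ge> 0" for \<tau> \<tau>'
  proof -
    have "\<pi> \<tau> - \<pi> \<tau>' = (F (x \<tau>) - F (x \<tau>')) + (Dl \<tau> - Dl \<tau>')" unfolding \<pi>_def by simp
    then have "norm (\<pi> \<tau> - \<pi> \<tau>') \<le> norm (F (x \<tau>) - F (x \<tau>')) + norm (Dl \<tau> - Dl \<tau>')"
      by (simp add: norm_triangle_ineq)
    moreover have "norm (F (x \<tau>) - F (x \<tau>')) \<le> LF * (Mw * \<bar>\<tau> - \<tau>'\<bar>)"
    proof -
      have "norm (F (x \<tau>) - F (x \<tau>')) \<le> LF * norm (x \<tau> - x \<tau>')" using LF(2) xK that by blast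
      also have "\<dots> \<le> LF * (Mw * \<bar>\<tau> - \<tau>'\<bar>)" using xlip2[OF that] LF(1) by (rule mult_left_mono)
      finally show ?thesis .
    qed
    moreover have "norm (Dl \<tau> - Dl \<tau>') \<le> DB' * \<bar>\<tau> - \<tau>'\<bar>" by (rule Dlip[OF that])
    moreover have "(LF * Mw + DB') * \<bar>\<tau> - \<tau>'\<bar> = LF * (Mw * \<bar>\<tau> - \<tau>'\<bar>) + DB' * \<bar>\<tau> - \<tau>'\<bar>"
      by (simp add: algebra_simps)
    ultimately show ?thesis by linarith
  qed
  have mmlip: "\<bar>bsel p \<bullet> p - bsel p' \<bullet> p'\<bar> \<le> R * norm (p - p')" for p p'
  proof -
    have a: "bsel p \<bullet> p \<le> bsel p' \<bullet> p" by (rule bmin[OF bK])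
    have b: "bsel p' \<bullet> p' \<le> bsel p \<bullet> p'" by (rule bmin[OF bK])
    have c1: "\<bar>bsel p' \<bullet> (p - p')\<bar> \<le> R * norm (p - p')" by (rule ip[OF bK])
    have c2: "\<bar>bsel p \<bullet> (p - p')\<bar> \<le> R * norm (p - p')" by (rule ip[OF bK])
    have e1: "bsel p' \<bullet> (p - p') = bsel p' \<bullet> p - bsel p' \<bullet> p'" by (simp add: inner_diff_right)
    have e2: "bsel p \<bullet> (p - p') = bsel p \<bullet> p - bsel p \<bullet> p'" by (simp add: inner_diff_right)
    show ?thesis using a b c1 c2 e1 e2 by (simp add: abs_le_iff)
  qed
  define LW where "LW = Mw * (MF + DB) + 2 * R * (LF * Mw + DB')"
  have Wlip: "\<bar>W \<tau> - W \<tau>'\<bar> \<le> LW * \<bar>\<tau> - \<tau>'\<bar>" if "\<tau> \<ge> 0" "\<tau>' \<ge> 0" for \<tau> \<tau>'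
  proof -
    have eq: "W \<tau> - W \<tau>' = (x \<tau> - x \<tau>') \<bullet> \<pi> \<tau> + x \<tau>' \<bullet> (\<pi> \<tau> - \<pi> \<tau>') - (bsel (\<pi> \<tau>) \<bullet> \<pi> \<tau> - bsel (\<pi> \<tau>') \<bullet> \<pi> \<tau>')"
      unfolding W_def by (simp add: inner_diff_left inner_diff_right)
    have t1: "\<bar>(x \<tau> - x \<tau>') \<bullet> \<pi> \<tau>\<bar> \<le> (Mw * \<bar>\<tau> - \<tau>'\<bar>) * (MF + DB)"
    proof -
      have "\<bar>(x \<tau> - x \<tau>') \<bullet> \<pi> \<tau>\<bar> \<le> norm (x \<tau> - x \<tau>') * norm (\<pi> \<tau>)" by (rule Cauchy_Schwarz_ineq2)
      also have "\<dots> \<le> (Mw * \<bar>\<tau> - \<tau>'\<bar>) * (MF + DB)"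
      proof (rule mult_mono)
        show "norm (x \<tau> - x \<tau>') \<le> Mw * \<bar>\<tau> - \<tau>'\<bar>" by (rule xlip2[OF that])
        show "norm (\<pi> \<tau>) \<le> MF + DB" using \<pi>b[OF that(1)] DB that by force
      qed (use Mw0 in auto)
      finally show ?thesis .
    qed
    have t2: "\<bar>x \<tau>' \<bullet> (\<pi> \<tau> - \<pi> \<tau>')\<bar> \<le> R * ((LF * Mw + DB') * \<bar>\<tau> - \<tau>'\<bar>)"
    proof -
      have "\<bar>x \<tau>' \<bullet> (\<pi> \<tau> - \<pi> \<tau>')\<bar> \<le> R * norm (\<pi> \<tau> - \<pi> \<tau>')" by (rule ip[OF xK[OF that(2)]])
      also have "\<dots> \<le> R * ((LF * Mw + DB') * \<bar>\<tau> - \<tau>'\<bar>)" using \<pi>lip[OF that] R0 by (rule mult_left_mono)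
      finally show ?thesis .
    qed
    have t3: "\<bar>bsel (\<pi> \<tau>) \<bullet> \<pi> \<tau> - bsel (\<pi> \<tau>') \<bullet> \<pi> \<tau>'\<bar> \<le> R * ((LF * Mw + DB') * \<bar>\<tau> - \<tau>'\<bar>)"
    proof -
      have "\<bar>bsel (\<pi> \<tau>) \<bullet> \<pi> \<tau> - bsel (\<pi> \<tau>') \<bullet> \<pi> \<tau>'\<bar> \<le> R * norm (\<pi> \<tau> - \<pi> \<tau>')" by (rule mmlip)
      also have "\<dots> \<le> R * ((LF * Mw + DB') * \<bar>\<tau> - \<tau>'\<bar>)" using \<pi>lip[OF that] R0 by (rule mult_left_mono)
      finally show ?thesis .
    qed
    have "LW * \<bar>\<tau> - \<tau>'\<bar> = (Mw * \<bar>\<tau> - \<tau>'\<bar>) * (MF + DB) + R * ((LF * Mw + DB') * \<bar>\<tau> - \<tau>'\<bar>) + R * ((LF * Mw + DB') * \<bar>\<tau> - \<tau>'\<bar>)"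
      unfolding LW_def by (simp add: algebra_simps)
    then show ?thesis using eq t1 t2 t3 by linarith
  qed
  define q where "q \<tau> = norm (eps \<tau>) * (2 * R * LF + MF + norm (Dl \<tau>)) + 2 * R * norm (Dl' \<tau>)" for \<tau>
  define N1 where "N1 = {t. t > 0 \<and> \<not> ((\<lambda>s. integral {t - s..t} w /\<^sub>R s) \<longlongrightarrow> w t) (at_right 0)}"
  have negN1: "negligible N1" unfolding N1_def by (rule LD_traj[OF wai wb])
  have goodpt: "\<exists>d>0. \<forall>s. 0 < s \<longrightarrow> s < d \<longrightarrow> exp t * (W t - Q) - exp (t - s) * (W (t - s) - Q) \<le> e * s"
    if tpos: "t > 0" and tN: "t \<notin> N1" and qQ: "q t \<le> Q" and e: "e > 0" for t Q e
  proof -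
    have t0: "t \<ge> 0" using tpos by simp
    have LDt: "((\<lambda>s. integral {t - s..t} w /\<^sub>R s) \<longlongrightarrow> w t) (at_right 0)"
      using tN tpos unfolding N1_def by auto
    have evt: "\<forall>\<^sub>F s in at_right 0. 0 < s \<and> s < t"
      unfolding eventually_at_right_field using tpos by (intro exI[of _ t]) auto
    have dx: "((\<lambda>s. (x t - x (t - s)) /\<^sub>R s) \<longlongrightarrow> w t) (at_right 0)"
    proof -
      have "\<forall>\<^sub>F s in at_right 0. integral {t - s..t} w /\<^sub>R s = (x t - x (t - s)) /\<^sub>R s"
        using evt
      proof eventually_elim
        case (elim s)
        then have "x t - x (t - s) = integral {t - s..t} w" using xdiff[of "t - s" t] by simp
        then show ?case by simp
      qed
      from tendsto_cong[OF this] LDt show ?thesis by simp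
    qed
    have xc: "((\<lambda>s. x (t - s)) \<longlongrightarrow> x t) (at_right 0)"
    proof -
      have "((\<lambda>s. x (t - s) - x t) \<longlongrightarrow> 0) (at_right 0)"
      proof (rule tendsto_0_le[where f="\<lambda>s. s" and K=Mw])
        show "((\<lambda>s::real. s) \<longlongrightarrow> 0) (at_right 0)" by (rule tendsto_ident_at)
        show "\<forall>\<^sub>F s in at_right 0. norm (x (t - s) - x t) \<le> norm s * Mw"
          using evt
        proof eventually_elim
          case (elim s)
          then have "norm (x t - x (t - s)) \<le> Mw * (t - (t - s))" by (intro xlip) auto
          then show ?case using elim by (simp add: norm_minus_commute mult.commute)
        qed
      qed
      then show ?thesis by (simp add: LIM_zero_iff)
    qed
    define x0 where "x0 = x t"
    have x0K: "x0 \<in> K" unfolding x0_def using xK[OF t0] .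
    have dFx: "((\<lambda>s. (F (x t) - F (x (t - s))) /\<^sub>R s) \<longlongrightarrow> blinfun_apply (F' (x t)) (w t)) (at_right 0)"
    proof -
      have hd: "(F has_derivative blinfun_apply (F' x0)) (at x0)" using dF x0K by blast
      define \<rho> where "\<rho> y = norm ((F y - F x0) - blinfun_apply (F' x0) (y - x0)) / norm (y - x0)" for y
      have rho: "(\<rho> \<longlongrightarrow> 0) (at x0)" using hd unfolding has_derivative_iff_norm \<rho>_def by blast
      have \<rho>0: "\<rho> x0 = 0" unfolding \<rho>_def by simp
      have \<rho>c: "isCont \<rho> x0" unfolding isCont_def \<rho>0 using rho .
      have \<rho>s: "((\<lambda>s. \<rho> (x (t - s))) \<longlongrightarrow> 0) (at_right 0)"
        using isCont_tendsto_compose[OF \<rho>c xc[folded x0_def]] \<rho>0 by simp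
      have nD: "norm ((F y - F x0) - blinfun_apply (F' x0) (y - x0)) = \<rho> y * norm (y - x0)" for y
        by (cases "y = x0") (simp_all add: \<rho>_def)
      have diff0: "((\<lambda>s. (F x0 - F (x (t - s))) /\<^sub>R s - blinfun_apply (F' x0) ((x t - x (t - s)) /\<^sub>R s)) \<longlongrightarrow> 0) (at_right 0)"
      proof (rule tendsto_0_le[OF \<rho>s, where K=Mw])
        show "\<forall>\<^sub>F s in at_right 0. norm ((F x0 - F (x (t - s))) /\<^sub>R s - blinfun_apply (F' x0) ((x t - x (t - s)) /\<^sub>R s)) \<le> norm (\<rho> (x (t - s))) * Mw"
          using evt
        proof eventually_elim
          case (elim s)
          define y where "y = x (t - s)"
          have ns: "norm (x0 - y) \<le> Mw * s" unfolding x0_def y_def using xlip[of "t - s" t] elim by auto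
          define D where "D = (F y - F x0) - blinfun_apply (F' x0) (y - x0)"
          have "(F x0 - F y) /\<^sub>R s - blinfun_apply (F' x0) ((x0 - y) /\<^sub>R s) = inverse s *\<^sub>R (- D)"
            unfolding D_def by (simp add: blinfun.scaleR_right blinfun.diff_right algebra_simps)
          then have "norm ((F x0 - F y) /\<^sub>R s - blinfun_apply (F' x0) ((x0 - y) /\<^sub>R s)) = inverse s * norm D"
            using elim by simp
          also have "\<dots> = inverse s * (\<rho> y * norm (y - x0))" unfolding D_def using nD[of y] by simp
          also have "\<dots> \<le> inverse s * (\<rho> y * (Mw * s))"
            using ns elim by (intro mult_left_mono) (auto simp: \<rho>_def norm_minus_commute)
          also have "\<dots> = norm (\<rho> y) * Mw" using elim by (simp add: \<rho>_def)
          finally show ?case unfolding y_def x0_def .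
        qed
      qed
      have lin: "((\<lambda>s. blinfun_apply (F' x0) ((x t - x (t - s)) /\<^sub>R s)) \<longlongrightarrow> blinfun_apply (F' x0) (w t)) (at_right 0)"
        using bounded_linear.tendsto[OF blinfun.bounded_linear_right dx] .
      have "((\<lambda>s. ((F x0 - F (x (t - s))) /\<^sub>R s - blinfun_apply (F' x0) ((x t - x (t - s)) /\<^sub>R s))
                 + blinfun_apply (F' x0) ((x t - x (t - s)) /\<^sub>R s)) \<longlongrightarrow> 0 + blinfun_apply (F' x0) (w t)) (at_right 0)"
        by (rule tendsto_add[OF diff0 lin])
      then show ?thesis unfolding x0_def by simp
    qed
    have dD: "((\<lambda>s. (Dl t - Dl (t - s)) /\<^sub>R s) \<longlongrightarrow> Dl' t) (at_right 0)"
    proof -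
      have "(Dl has_derivative (\<lambda>h. h *\<^sub>R Dl' t)) (at t within {0..})"
        using dDl t0 unfolding has_vector_derivative_def by auto
      then have "((\<lambda>y. norm ((Dl y - Dl t) - (y - t) *\<^sub>R Dl' t) / norm (y - t)) \<longlongrightarrow> 0) (at t within {0..})"
        unfolding has_derivative_iff_norm by blast
      then have l: "((\<lambda>s. norm ((Dl (t - s) - Dl t) - ((t - s) - t) *\<^sub>R Dl' t) / norm ((t - s) - t)) \<longlongrightarrow> 0) (at_right 0)"
        by (rule tendsto_left_shift) (use evt in \<open>eventually_elim, auto\<close>)
      have "\<forall>\<^sub>F s in at_right 0. norm ((Dl (t - s) - Dl t) - ((t - s) - t) *\<^sub>R Dl' t) / norm ((t - s) - t) = norm ((Dl t - Dl (t - s)) /\<^sub>R s - Dl' t)"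
        using evt
      proof eventually_elim
        case (elim s)
        have "(Dl t - Dl (t - s)) /\<^sub>R s - Dl' t = - (inverse s *\<^sub>R ((Dl (t - s) - Dl t) - ((t - s) - t) *\<^sub>R Dl' t))"
          using elim by (simp add: algebra_simps)
        then show ?case using elim by (simp add: divide_inverse mult.commute)
      qed
      from tendsto_cong[OF this] l have "((\<lambda>s. norm ((Dl t - Dl (t - s)) /\<^sub>R s - Dl' t)) \<longlongrightarrow> 0) (at_right 0)"
        by simp
      then show ?thesis by (simp add: tendsto_norm_zero_iff LIM_zero_iff)
    qed
    have \<pi>c: "((\<lambda>s. \<pi> (t - s)) \<longlongrightarrow> \<pi> t) (at_right 0)"
    proof -
      have "isCont F (x t)" using dF[OF xK[OF t0]] has_derivative_continuous by blast
      then have a: "((\<lambda>s. F (x (t - s))) \<longlongrightarrow> F (x t)) (at_right 0)" using isCont_tendsto_compose[OF _ xc] by blast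
      have "continuous (at t within {0..}) Dl" using dDl t0 has_vector_derivative_continuous by blast
      then have "(Dl \<longlongrightarrow> Dl t) (at t within {0..})" by (simp add: continuous_within)
      then have b: "((\<lambda>s. Dl (t - s)) \<longlongrightarrow> Dl t) (at_right 0)"
        by (rule tendsto_left_shift) (use evt in \<open>eventually_elim, auto\<close>)
      show ?thesis unfolding \<pi>_def using tendsto_add[OF a b] .
    qed
    define Qf where "Qf s = (x t - b t) \<bullet> ((F (x t) - F (x (t - s))) /\<^sub>R s + (Dl t - Dl (t - s)) /\<^sub>R s)
        + ((x t - x (t - s)) /\<^sub>R s) \<bullet> \<pi> (t - s)" for s
    define Lim where "Lim = (x t - b t) \<bullet> (blinfun_apply (F' (x t)) (w t) + Dl' t) + w t \<bullet> \<pi> t"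
    have Qlim: "(Qf \<longlongrightarrow> Lim) (at_right 0)"
      unfolding Qf_def Lim_def by (intro tendsto_intros dFx dD dx \<pi>c)
    have LimB: "Lim \<le> - W t + q t"
    proof -
      define xt bt et where "xt = x t" and "bt = b t" and "et = eps t"
      have xtK: "xt \<in> K" and btK: "bt \<in> K" unfolding xt_def bt_def using xK[OF t0] bK2[OF t0] by auto
      have wt: "w t = (bt - xt) + et" unfolding w_def xt_def bt_def et_def by simp
      have "blinfun_apply (F' xt) (w t) = blinfun_apply (F' xt) (bt - xt) + blinfun_apply (F' xt) et"
        unfolding wt by (simp add: blinfun.add_right)
      then have L: "Lim = - ((bt - xt) \<bullet> blinfun_apply (F' xt) (bt - xt)) + (xt - bt) \<bullet> blinfun_apply (F' xt) et
           + (xt - bt) \<bullet> Dl' t + (- ((xt - bt) \<bullet> \<pi> t) + et \<bullet> \<pi> t)"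
        unfolding Lim_def xt_def[symmetric] bt_def[symmetric] wt
        by (simp add: inner_add_right inner_add_left inner_diff_left inner_diff_right algebra_simps)
      have l1: "0 \<le> (bt - xt) \<bullet> blinfun_apply (F' xt) (bt - xt)" using dm xtK btK by blast
      have l2: "(xt - bt) \<bullet> blinfun_apply (F' xt) et \<le> 2 * R * LF * norm (eps t)"
      proof -
        have "(xt - bt) \<bullet> blinfun_apply (F' xt) et \<le> norm (xt - bt) * norm (blinfun_apply (F' xt) et)"
          by (rule norm_cauchy_schwarz)
        also have "\<dots> \<le> (2 * R) * (LF * norm et)"
        proof (rule mult_mono)
          show "norm (xt - bt) \<le> 2 * R" by (rule nKK[OF xtK btK])
          have "norm (blinfun_apply (F' xt) et) \<le> norm (F' xt) * norm et" by (rule norm_blinfun)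
          also have "\<dots> \<le> LF * norm et" using LF(3) xtK by (intro mult_right_mono) auto
          finally show "norm (blinfun_apply (F' xt) et) \<le> LF * norm et" .
        qed (use R0 in auto)
        finally show ?thesis unfolding et_def by (simp add: mult.assoc)
      qed
      have l3: "(xt - bt) \<bullet> Dl' t \<le> 2 * R * norm (Dl' t)"
      proof -
        have "(xt - bt) \<bullet> Dl' t \<le> norm (xt - bt) * norm (Dl' t)" by (rule norm_cauchy_schwarz)
        also have "\<dots> \<le> 2 * R * norm (Dl' t)" using nKK[OF xtK btK] by (intro mult_right_mono) auto
        finally show ?thesis .
      qed
      have l4: "(xt - bt) \<bullet> \<pi> t = W t" unfolding xt_def bt_def using Weq[OF t0] by simp
      have l5: "et \<bullet> \<pi> t \<le> norm (eps t) * (MF + norm (Dl t))"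
      proof -
        have "et \<bullet> \<pi> t \<le> norm et * norm (\<pi> t)" by (rule norm_cauchy_schwarz)
        also have "\<dots> \<le> norm (eps t) * (MF + norm (Dl t))" unfolding et_def using \<pi>b[OF t0] by (intro mult_left_mono) auto
        finally show ?thesis .
      qed
      have "q t = 2 * R * LF * norm (eps t) + norm (eps t) * (MF + norm (Dl t)) + 2 * R * norm (Dl' t)"
        unfolding q_def by (simp add: algebra_simps)
      then show ?thesis using L l1 l2 l3 l4 l5 by linarith
    qed
    have eq1: "((\<lambda>s. (exp t - exp (t - s)) / s) \<longlongrightarrow> exp t) (at_right 0)"
    proof -
      have "((\<lambda>y. (exp y - exp t) / (y - t)) \<longlongrightarrow> exp t) (at t within UNIV)"
        using DERIV_exp[of t] has_field_derivative_iff by blast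
      then have "((\<lambda>s. (exp (t - s) - exp t) / ((t - s) - t)) \<longlongrightarrow> exp t) (at_right 0)"
        by (rule tendsto_left_shift) simp
      moreover have "(\<lambda>s. (exp (t - s) - exp t) / ((t - s) - t)) = (\<lambda>s. (exp t - exp (t - s)) / s)"
      proof
        fix s :: real show "(exp (t - s) - exp t) / ((t - s) - t) = (exp t - exp (t - s)) / s"
          by (cases "s = 0") (simp_all add: field_simps)
      qed
      ultimately show ?thesis by simp
    qed
    have ec: "((\<lambda>s. exp (t - s)) \<longlongrightarrow> exp t) (at_right 0)"
    proof -
      have "((\<lambda>s. exp (t - s)) \<longlongrightarrow> exp (t - 0)) (at_right (0::real))" by (intro tendsto_intros)
      then show ?thesis by simp
    qed
    define Hf where "Hf s = ((exp t - exp (t - s)) / s) * (W t - Q) + exp (t - s) * Qf s" for s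
    have Hlim: "(Hf \<longlongrightarrow> exp t * (W t - Q) + exp t * Lim) (at_right 0)"
      unfolding Hf_def by (intro tendsto_intros eq1 ec Qlim)
    have Hneg: "exp t * (W t - Q) + exp t * Lim < e"
    proof -
      have "W t - Q + Lim \<le> 0" using LimB qQ by linarith
      then have "exp t * (W t - Q + Lim) \<le> 0" by (simp add: mult_le_0_iff)
      then show ?thesis using e by (simp add: algebra_simps)
    qed
    have evH: "\<forall>\<^sub>F s in at_right 0. Hf s < e" using order_tendstoD(2)[OF Hlim Hneg] .
    have mainineq: "exp t * (W t - Q) - exp (t - s) * (W (t - s) - Q) \<le> s * Hf s" if s: "0 < s" "s < t" for s
    proof -
      have ts0: "t - s \<ge> 0" using s by simp
      have Wts: "(x (t - s) - b t) \<bullet> \<pi> (t - s) \<le> W (t - s)" by (rule Wge[OF bK2[OF t0]])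
      have Wt: "W t = (x t - b t) \<bullet> \<pi> t" by (rule Weq[OF t0])
      have pd: "\<pi> t - \<pi> (t - s) = (F (x t) - F (x (t - s))) + (Dl t - Dl (t - s))"
        unfolding \<pi>_def by (simp add: algebra_simps)
      have sum: "(F (x t) - F (x (t - s))) /\<^sub>R s + (Dl t - Dl (t - s)) /\<^sub>R s = (\<pi> t - \<pi> (t - s)) /\<^sub>R s"
        unfolding pd by (simp only: scaleR_right_distrib)
      have Qs: "Qf s = inverse s * ((x t - b t) \<bullet> (\<pi> t - \<pi> (t - s)) + (x t - x (t - s)) \<bullet> \<pi> (t - s))"
        unfolding Qf_def sum by (simp add: distrib_left)
      have sQ: "s * Qf s = (x t - b t) \<bullet> (\<pi> t - \<pi> (t - s)) + (x t - x (t - s)) \<bullet> \<pi> (t - s)"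
        unfolding Qs using s by simp
      have dW: "W t - W (t - s) \<le> s * Qf s"
      proof -
        have "(x t - b t) \<bullet> \<pi> t - (x (t - s) - b t) \<bullet> \<pi> (t - s) = (x t - b t) \<bullet> (\<pi> t - \<pi> (t - s)) + (x t - x (t - s)) \<bullet> \<pi> (t - s)"
          by (simp add: inner_diff_left inner_diff_right algebra_simps)
        then show ?thesis using Wts Wt sQ by linarith
      qed
      have "exp t * (W t - Q) - exp (t - s) * (W (t - s) - Q) = (exp t - exp (t - s)) * (W t - Q) + exp (t - s) * (W t - W (t - s))"
        by (simp add: algebra_simps)
      also have "\<dots> \<le> (exp t - exp (t - s)) * (W t - Q) + exp (t - s) * (s * Qf s)"
        using dW by (intro add_left_mono mult_left_mono) auto
      also have "\<dots> = s * Hf s" unfolding Hf_def using s by (simp add: field_simps)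
      finally show ?thesis .
    qed
    have "\<forall>\<^sub>F s in at_right 0. exp t * (W t - Q) - exp (t - s) * (W (t - s) - Q) \<le> e * s"
      using evH evt
    proof eventually_elim
      case (elim s)
      have "exp t * (W t - Q) - exp (t - s) * (W (t - s) - Q) \<le> s * Hf s" using mainineq elim by blast
      also have "\<dots> \<le> s * e" using elim by (intro mult_left_mono) auto
      finally show ?case by (simp add: mult.commute)
    qed
    then obtain d where "d > 0" "\<forall>s>0. s < d \<longrightarrow> exp t * (W t - Q) - exp (t - s) * (W (t - s) - Q) \<le> e * s"
      unfolding eventually_at_right_field by auto
    then show ?thesis by blast
  qed
  have decay: "W t \<le> exp (-(t - a)) * W a + Q"
    if a0: "0 \<le> a" and at: "a \<le> t" and Q0: "0 \<le> Q" and hq: "\<forall>\<tau>\<in>{a<..t}. q \<tau> \<le> Q" for a t Q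
  proof -
    define g where "g \<tau> = exp \<tau> * (W \<tau> - Q)" for \<tau>
    define Wm where "Wm = 2 * R * (MF + DB)"
    define Lg where "Lg = exp t * (LW + Wm + Q)"
    have Wm: "\<bar>W \<tau> - Q\<bar> \<le> Wm + Q" if "\<tau> \<ge> 0" for \<tau>
    proof -
      have "W \<tau> \<le> 2 * R * (MF + norm (Dl \<tau>))" by (rule Wup[OF that])
      also have "\<dots> \<le> Wm" unfolding Wm_def using DB that R0 by (intro mult_left_mono) auto
      finally show ?thesis using W0[OF that] Q0 by linarith
    qed
    have glip: "\<bar>g \<tau> - g \<tau>'\<bar> \<le> Lg * \<bar>\<tau> - \<tau>'\<bar>" if "\<tau> \<in> {a..t}" "\<tau>' \<in> {a..t}" for \<tau> \<tau>'
    proof -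
      have t0: "\<tau> \<ge> 0" "\<tau>' \<ge> 0" "\<tau> \<le> t" "\<tau>' \<le> t" using that a0 by auto
      have eq: "g \<tau> - g \<tau>' = (exp \<tau> - exp \<tau>') * (W \<tau> - Q) + exp \<tau>' * (W \<tau> - W \<tau>')"
        unfolding g_def by (simp add: algebra_simps)
      have l1: "\<bar>(exp \<tau> - exp \<tau>') * (W \<tau> - Q)\<bar> \<le> (exp t * \<bar>\<tau> - \<tau>'\<bar>) * (Wm + Q)"
        unfolding abs_mult using exp_lip[OF t0(3,4)] Wm[OF t0(1)] by (intro mult_mono) auto
      have l2: "\<bar>exp \<tau>' * (W \<tau> - W \<tau>')\<bar> \<le> exp t * (LW * \<bar>\<tau> - \<tau>'\<bar>)"
        unfolding abs_mult using t0 Wlip[OF t0(1,2)] by (intro mult_mono) auto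
      have "Lg * \<bar>\<tau> - \<tau>'\<bar> = (exp t * \<bar>\<tau> - \<tau>'\<bar>) * (Wm + Q) + exp t * (LW * \<bar>\<tau> - \<tau>'\<bar>)"
        unfolding Lg_def by (simp add: algebra_simps)
      then show ?thesis using eq l1 l2 by linarith
    qed
    have "g t \<le> g a"
    proof (rule lip_descent[OF at negN1 glip])
      fix \<tau> e :: real assume \<tau>: "\<tau> \<in> {a<..t}" and \<tau>N: "\<tau> \<notin> N1" and e: "e > 0"
      have "\<tau> > 0" using \<tau> a0 by auto
      moreover have "q \<tau> \<le> Q" using hq \<tau> by auto
      ultimately show "\<exists>d>0. \<forall>s. 0 < s \<longrightarrow> s < d \<longrightarrow> g \<tau> - g (\<tau> - s) \<le> e * s"
        unfolding g_def using goodpt \<tau>N e by blast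
    qed
    then have "exp t * (W t - Q) \<le> exp a * (W a - Q)" unfolding g_def .
    then have "W t - Q \<le> (exp a / exp t) * (W a - Q)" by (simp add: field_simps)
    also have "exp a / exp t = exp (-(t - a))" by (simp add: exp_diff[symmetric])
    finally have "W t \<le> exp (-(t - a)) * W a + Q - exp (-(t - a)) * Q" by (simp add: algebra_simps)
    moreover have "0 \<le> exp (-(t - a)) * Q" using Q0 by simp
    ultimately show ?thesis by linarith
  qed
  show ?thesis
  proof (intro exI[of _ W] conjI allI impI)
    show "W 0 \<le> (MF + 2 * R * LF) * norm (x 0 - xs) + 2 * R * norm (Dl 0)" by (rule part2)
  next
    fix t :: real assume "0 \<le> t"
    then show "c * (norm (x t - xs))\<^sup>2 \<le> W t + 2 * R * norm (Dl t)" by (rule part1)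
  next
    fix t :: real assume "0 \<le> t" then show "0 \<le> W t" by (rule W0)
  next
    fix t :: real assume "0 \<le> t" then show "W t \<le> 2 * R * (MF + norm (Dl t))" by (rule Wup)
  next
    fix a t Q :: real
    assume "0 \<le> a" "a \<le> t" "0 \<le> Q"
      "\<forall>\<tau>\<in>{a<..t}. norm (eps \<tau>) * (2 * R * LF + MF + norm (Dl \<tau>)) + 2 * R * norm (Dl' \<tau>) \<le> Q"
    then show "W t \<le> exp (-(t - a)) * W a + Q" using decay unfolding q_def by blast
  qed
qed

lemma exp_neg_0: "((\<lambda>t::real. exp (- t)) \<longlongrightarrow> 0) at_top"
  using filterlim_compose[OF exp_at_bot filterlim_uminus_at_bot_at_top] by simp

lemma classK_sqrt:
  fixes h :: "real \<Rightarrow> real"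
  assumes "continuous_on {0..} h" "\<And>a b. 0 \<le> a \<Longrightarrow> a < b \<Longrightarrow> h a < h b" "h 0 = 0"
  shows "classK (\<lambda>s. sqrt (h s))"
  unfolding classK_def
proof (intro conjI)
  show "continuous_on {0..} (\<lambda>s. sqrt (h s))" by (intro continuous_intros assms(1))
  show "strict_mono_on {0..} (\<lambda>s. sqrt (h s))"
    by (rule strict_mono_onI) (use assms(2) in auto)
  show "sqrt (h 0) = 0" using assms(3) by simp
qed

lemma sqrt3: "0 \<le> a \<Longrightarrow> 0 \<le> b \<Longrightarrow> 0 \<le> d \<Longrightarrow> sqrt (a + b + d) \<le> sqrt a + sqrt b + sqrt d"
  by (smt (verit) real_sqrt_ge_zero sqrt_add_le_add_sqrt)

lemma supnorm_ge:
  fixes f :: "real \<Rightarrow> 'a::real_normed_vector"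
  assumes "bounded (f ` {0..})" "t \<ge> 0"
  shows "norm (f t) \<le> supnorm f"
proof -
  obtain B where "\<forall>s\<ge>0. norm (f s) \<le> B" using assms(1) unfolding bounded_iff by auto
  then have "bdd_above ((\<lambda>s. norm (f s)) ` {0..})" by (auto intro: bdd_aboveI2)
  then show ?thesis unfolding supnorm_def using assms(2) by (intro cSUP_upper) auto
qed

theorem theorem2:
  fixes K :: "'a::euclidean_space set" and F :: "'a \<Rightarrow> 'a" and F' :: "'a \<Rightarrow> ('a \<Rightarrow>\<^sub>L 'a)"
    and c :: real and xs :: 'a
  assumes "K \<noteq> {}" and "compact K" and "convex K"
    and "open U" and "K \<subseteq> U" and "\<And>x. x \<in> U \<Longrightarrow> (F has_derivative blinfun_apply (F' x)) (at x)"
    and "continuous_on U F'"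
    and "c > 0" and "\<And>x y. x \<in> K \<Longrightarrow> y \<in> K \<Longrightarrow> (x - y) \<bullet> (F x - F y) \<ge> c * (norm (x - y))\<^sup>2"
    and "VI_sol K F xs"
  shows "(\<exists>w g1 g2. classKL w \<and> classK g1 \<and> classK g2 \<and>
           (\<forall>x eps Dl Dl'.
              admissible K eps x \<and> x 0 \<in> K \<and>
              bounded (Dl ` {0..}) \<and>
              (\<forall>t\<ge>0. (Dl has_vector_derivative Dl' t) (at t within {0..})) \<and>
              bounded (Dl' ` {0..}) \<and>
              BR_solution K F eps Dl x \<longrightarrow>
              (\<forall>t\<ge>0. norm (x t - xs) \<le> w (norm (x 0 - xs)) t
                       + g1 (max (supnorm eps) (supnorm Dl)) + g2 (supnorm Dl'))))
       \<and> (\<forall>x eps Dl Dl'.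
              admissible K eps x \<and> x 0 \<in> K \<and>
              bounded (Dl ` {0..}) \<and>
              (\<forall>t\<ge>0. (Dl has_vector_derivative Dl' t) (at t within {0..})) \<and>
              bounded (Dl' ` {0..}) \<and>
              BR_solution K F eps Dl x \<and>
              (eps \<longlongrightarrow> 0) at_top \<and> (Dl \<longlongrightarrow> 0) at_top \<and> (Dl' \<longlongrightarrow> 0) at_top \<longrightarrow>
              (x \<longlongrightarrow> xs) at_top)"
proof -
  note asm = assms
  obtain R MF LF where R: "R \<ge> 1" and MF: "MF \<ge> 0" and LF: "LF \<ge> 0"
    and RK: "\<forall>y\<in>K. norm y \<le> R" and MFK: "\<forall>y\<in>K. norm (F y) \<le> MF"
    and lip: "\<forall>y\<in>K. \<forall>z\<in>K. norm (F y - F z) \<le> LF * norm (y - z)"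
    and LFK: "\<forall>y\<in>K. norm (F' y) \<le> LF"
    and dm: "\<forall>y\<in>K. \<forall>z\<in>K. 0 \<le> (z - y) \<bullet> blinfun_apply (F' y) (z - y)"
    using static_facts[OF assms(1-9)] by blast
  have dFK: "\<And>y. y \<in> K \<Longrightarrow> (F has_derivative blinfun_apply (F' y)) (at y)" using assms(5,6) by blast
  have c: "c > 0" by fact
  have core: "\<exists>W. (\<forall>t\<ge>0. c * (norm (x t - xs))\<^sup>2 \<le> W t + 2 * R * norm (Dl t))
           \<and> (W 0 \<le> (MF + 2 * R * LF) * norm (x 0 - xs) + 2 * R * norm (Dl 0))
           \<and> (\<forall>t\<ge>0. 0 \<le> W t \<and> W t \<le> 2 * R * (MF + norm (Dl t)))
           \<and> (\<forall>a t Q. 0 \<le> a \<longrightarrow> a \<le> t \<longrightarrow> 0 \<le> Q \<longrightarrow>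
                 (\<forall>\<tau>\<in>{a<..t}. norm (eps \<tau>) * (2 * R * LF + MF + norm (Dl \<tau>)) + 2 * R * norm (Dl' \<tau>) \<le> Q)
                 \<longrightarrow> W t \<le> exp (-(t - a)) * W a + Q)"
    if h: "admissible K eps x" "bounded (Dl ` {0..})"
      "\<forall>t\<ge>0. (Dl has_vector_derivative Dl' t) (at t within {0..})"
      "bounded (Dl' ` {0..})" "BR_solution K F eps Dl x" for x eps Dl Dl'
    by (rule traj_core[OF assms(1,2) dFK assms(8,9,10) R RK MF MFK LF lip LFK dm h])
  define A where "A = MF + 2 * R * LF + 1"
  have RLF: "0 \<le> 2 * R * LF" using R LF by simp
  have k0: "0 \<le> 2 * R * LF + MF" using RLF MF by linarith
  have A: "A > 0" unfolding A_def using MF RLF by linarith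
  define w where "w r t = sqrt (A * r * exp (- t) / c)" for r t :: real
  define g1 where "g1 s = sqrt ((4 * R * s + s * (2 * R * LF + MF + s)) / c)" for s :: real
  define g2 where "g2 s = sqrt (2 * R * s / c)" for s :: real
  have Kw: "classK (\<lambda>r. w r t)" for t
    unfolding w_def
  proof (rule classK_sqrt)
    show "continuous_on {0..} (\<lambda>r. A * r * exp (- t) / c)" using c by (intro continuous_intros) auto
    show "A * a * exp (- t) / c < A * b * exp (- t) / c" if "0 \<le> a" "a < b" for a b
      using that A c by (simp add: divide_strict_right_mono)
  qed simp
  have KL: "classKL w"
    unfolding classKL_def
  proof (intro conjI allI impI)
    fix t :: real show "classK (\<lambda>r. w r t)" by (rule Kw)
  next
    fix r s t :: real assume r: "0 \<le> r" and st0: "0 \<le> s" and st1: "s \<le> t"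
    have "A * r * exp (- t) / c \<le> A * r * exp (- s) / c"
      using r st0 st1 A c by (intro divide_right_mono mult_left_mono) auto
    then show "w r t \<le> w r s" unfolding w_def by simp
  next
    fix r :: real assume r: "0 \<le> r"
    have "((\<lambda>t. sqrt (A * r * exp (- t) / c)) \<longlongrightarrow> sqrt (A * r * 0 / c)) at_top"
      using c by (intro tendsto_intros exp_neg_0) auto
    then show "((\<lambda>t. w r t) \<longlongrightarrow> 0) at_top" unfolding w_def by simp
  qed
  have K1: "classK g1"
    unfolding g1_def
  proof (rule classK_sqrt)
    show "continuous_on {0..} (\<lambda>s. (4 * R * s + s * (2 * R * LF + MF + s)) / c)" using c by (intro continuous_intros) auto
    show "(4 * R * a + a * (2 * R * LF + MF + a)) / c < (4 * R * b + b * (2 * R * LF + MF + b)) / c"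
      if "0 \<le> a" "a < b" for a b
    proof -
      have k: "2 * R * LF + MF \<ge> 0" using R LF MF by simp
      have "4 * R * a < 4 * R * b" using that R by simp
      moreover have "a * (2 * R * LF + MF) \<le> b * (2 * R * LF + MF)" using that k by (intro mult_right_mono) auto
      moreover have "a * a \<le> b * b" using that by (intro mult_mono) auto
      ultimately have "4 * R * a + a * (2 * R * LF + MF + a) < 4 * R * b + b * (2 * R * LF + MF + b)"
        by (simp add: algebra_simps)
      then show ?thesis using c by (simp add: divide_strict_right_mono)
    qed
  qed simp
  have K2: "classK g2"
    unfolding g2_def
  proof (rule classK_sqrt)
    show "continuous_on {0..} (\<lambda>s. 2 * R * s / c)" using c by (intro continuous_intros) auto
    show "2 * R * a / c < 2 * R * b / c" if "0 \<le> a" "a < b" for a b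
      using that R c by (simp add: divide_strict_right_mono)
  qed simp
  have part1: "\<forall>t\<ge>0. norm (x t - xs) \<le> w (norm (x 0 - xs)) t
                       + g1 (max (supnorm eps) (supnorm Dl)) + g2 (supnorm Dl')"
    if h: "admissible K eps x" "x 0 \<in> K" "bounded (Dl ` {0..})"
      "\<forall>t\<ge>0. (Dl has_vector_derivative Dl' t) (at t within {0..})"
      "bounded (Dl' ` {0..})" "BR_solution K F eps Dl x" for x eps Dl Dl'
  proof (intro allI impI)
    fix t :: real assume t: "t \<ge> 0"
    obtain W where W1: "\<forall>t\<ge>0. c * (norm (x t - xs))\<^sup>2 \<le> W t + 2 * R * norm (Dl t)"
      and W2: "W 0 \<le> (MF + 2 * R * LF) * norm (x 0 - xs) + 2 * R * norm (Dl 0)"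
      and W3: "\<forall>t\<ge>0. 0 \<le> W t \<and> W t \<le> 2 * R * (MF + norm (Dl t))"
      and W4: "\<forall>a t Q. 0 \<le> a \<longrightarrow> a \<le> t \<longrightarrow> 0 \<le> Q \<longrightarrow>
                 (\<forall>\<tau>\<in>{a<..t}. norm (eps \<tau>) * (2 * R * LF + MF + norm (Dl \<tau>)) + 2 * R * norm (Dl' \<tau>) \<le> Q)
                 \<longrightarrow> W t \<le> exp (-(t - a)) * W a + Q"
      using core[OF h(1,3,4,5,6)] by blast
    define \<eta>1 where "\<eta>1 = max (supnorm eps) (supnorm Dl)"
    define \<eta>2 where "\<eta>2 = supnorm Dl'"
    have beps: "bounded (eps ` {0..})" using h(1) unfolding admissible_def by auto
    have e1: "norm (eps \<tau>) \<le> \<eta>1" if "\<tau> \<ge> 0" for \<tau>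
      unfolding \<eta>1_def using supnorm_ge[OF beps that] by linarith
    have e2: "norm (Dl \<tau>) \<le> \<eta>1" if "\<tau> \<ge> 0" for \<tau>
      unfolding \<eta>1_def using supnorm_ge[OF h(3) that] by linarith
    have e3: "norm (Dl' \<tau>) \<le> \<eta>2" if "\<tau> \<ge> 0" for \<tau>
      unfolding \<eta>2_def using supnorm_ge[OF h(5) that] .
    have \<eta>1: "\<eta>1 \<ge> 0" using e1[of 0] norm_ge_zero by (meson order_trans order_refl)
    have \<eta>2: "\<eta>2 \<ge> 0" using e3[of 0] norm_ge_zero by (meson order_trans order_refl)
    define Qc where "Qc = \<eta>1 * (2 * R * LF + MF + \<eta>1) + 2 * R * \<eta>2"
    have Qc: "Qc \<ge> 0" unfolding Qc_def using \<eta>1 \<eta>2 R k0 LF MF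
      by (intro add_nonneg_nonneg mult_nonneg_nonneg) auto
    have qQ: "\<forall>\<tau>\<in>{0<..t}. norm (eps \<tau>) * (2 * R * LF + MF + norm (Dl \<tau>)) + 2 * R * norm (Dl' \<tau>) \<le> Qc"
    proof
      fix \<tau> assume "\<tau> \<in> {0<..t}"
      then have \<tau>: "\<tau> \<ge> 0" by simp
      have "norm (eps \<tau>) * (2 * R * LF + MF + norm (Dl \<tau>)) \<le> \<eta>1 * (2 * R * LF + MF + \<eta>1)"
        using e1[OF \<tau>] e2[OF \<tau>] \<eta>1 k0 by (intro mult_mono) auto
      moreover have "2 * R * norm (Dl' \<tau>) \<le> 2 * R * \<eta>2" using e3[OF \<tau>] R by simp
      ultimately show "norm (eps \<tau>) * (2 * R * LF + MF + norm (Dl \<tau>)) + 2 * R * norm (Dl' \<tau>) \<le> Qc"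
        unfolding Qc_def by linarith
    qed
    have Wt: "W t \<le> exp (-(t - 0)) * W 0 + Qc" using W4 t Qc qQ by blast
    define r where "r = norm (x 0 - xs)"
    have W0b: "W 0 \<le> A * r + 2 * R * \<eta>1"
    proof -
      have "(MF + 2 * R * LF) * r \<le> A * r" unfolding A_def r_def by (intro mult_right_mono) auto
      moreover have "2 * R * norm (Dl 0) \<le> 2 * R * \<eta>1" using e2[of 0] R by simp
      ultimately show ?thesis using W2 unfolding r_def by linarith
    qed
    have ex: "exp (- t) \<le> 1" "exp (- t) \<ge> 0" using t by auto
    have "c * (norm (x t - xs))\<^sup>2 \<le> W t + 2 * R * \<eta>1"
      using W1 t e2[OF t] R by (smt (verit) mult_left_mono)
    also have "\<dots> \<le> exp (- t) * (A * r + 2 * R * \<eta>1) + Qc + 2 * R * \<eta>1"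
      using Wt W0b ex by (smt (verit) mult_left_mono)
    also have "\<dots> \<le> A * r * exp (- t) + (4 * R * \<eta>1 + \<eta>1 * (2 * R * LF + MF + \<eta>1)) + 2 * R * \<eta>2"
    proof -
      have "exp (- t) * (2 * R * \<eta>1) \<le> 2 * R * \<eta>1" using ex R \<eta>1 by (simp add: mult_left_le_one_le)
      then show ?thesis unfolding Qc_def by (simp add: algebra_simps)
    qed
    finally have sq: "c * (norm (x t - xs))\<^sup>2 \<le> A * r * exp (- t) + (4 * R * \<eta>1 + \<eta>1 * (2 * R * LF + MF + \<eta>1)) + 2 * R * \<eta>2" .
    have r0: "r \<ge> 0" unfolding r_def by simp
    have nn: "0 \<le> A * r * exp (- t) / c" "0 \<le> (4 * R * \<eta>1 + \<eta>1 * (2 * R * LF + MF + \<eta>1)) / c" "0 \<le> 2 * R * \<eta>2 / c"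
      using A r0 c \<eta>1 \<eta>2 R k0 LF MF by (auto intro!: divide_nonneg_pos add_nonneg_nonneg mult_nonneg_nonneg)
    have "(norm (x t - xs))\<^sup>2 \<le> A * r * exp (- t) / c + (4 * R * \<eta>1 + \<eta>1 * (2 * R * LF + MF + \<eta>1)) / c + 2 * R * \<eta>2 / c"
      using sq c by (simp add: field_simps)
    then have "sqrt ((norm (x t - xs))\<^sup>2) \<le> sqrt (A * r * exp (- t) / c + (4 * R * \<eta>1 + \<eta>1 * (2 * R * LF + MF + \<eta>1)) / c + 2 * R * \<eta>2 / c)"
      by (rule real_sqrt_le_mono)
    also have "\<dots> \<le> sqrt (A * r * exp (- t) / c) + sqrt ((4 * R * \<eta>1 + \<eta>1 * (2 * R * LF + MF + \<eta>1)) / c) + sqrt (2 * R * \<eta>2 / c)"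
      using sqrt3[OF nn] .
    finally show "norm (x t - xs) \<le> w (norm (x 0 - xs)) t + g1 (max (supnorm eps) (supnorm Dl)) + g2 (supnorm Dl')"
      unfolding w_def g1_def g2_def r_def[symmetric] \<eta>1_def[symmetric] \<eta>2_def[symmetric] by simp
  qed
  have part2: "(x \<longlongrightarrow> xs) at_top"
    if h: "admissible K eps x" "x 0 \<in> K" "bounded (Dl ` {0..})"
      "\<forall>t\<ge>0. (Dl has_vector_derivative Dl' t) (at t within {0..})"
      "bounded (Dl' ` {0..})" "BR_solution K F eps Dl x"
      and l: "(eps \<longlongrightarrow> 0) at_top" "(Dl \<longlongrightarrow> 0) at_top" "(Dl' \<longlongrightarrow> 0) at_top" for x eps Dl Dl'
  proof (rule tendstoI)
    fix \<epsilon> :: real assume \<epsilon>: "\<epsilon> > 0"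
    obtain W where W1: "\<forall>t\<ge>0. c * (norm (x t - xs))\<^sup>2 \<le> W t + 2 * R * norm (Dl t)"
      and W3: "\<forall>t\<ge>0. 0 \<le> W t \<and> W t \<le> 2 * R * (MF + norm (Dl t))"
      and W4: "\<forall>a t Q. 0 \<le> a \<longrightarrow> a \<le> t \<longrightarrow> 0 \<le> Q \<longrightarrow>
                 (\<forall>\<tau>\<in>{a<..t}. norm (eps \<tau>) * (2 * R * LF + MF + norm (Dl \<tau>)) + 2 * R * norm (Dl' \<tau>) \<le> Q)
                 \<longrightarrow> W t \<le> exp (-(t - a)) * W a + Q"
      using core[OF h(1,3,4,5,6)] by blast
    obtain DB where DB: "\<forall>t\<ge>0. norm (Dl t) \<le> DB" using h(3) unfolding bounded_iff by auto
    define \<theta> where "\<theta> = c * \<epsilon>\<^sup>2 / 8"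
    have \<theta>: "\<theta> > 0" unfolding \<theta>_def using c \<epsilon> by simp
    have ql: "((\<lambda>\<tau>. norm (eps \<tau>) * (2 * R * LF + MF + norm (Dl \<tau>)) + 2 * R * norm (Dl' \<tau>)) \<longlongrightarrow>
              0 * (2 * R * LF + MF + 0) + 2 * R * 0) at_top"
      using l by (intro tendsto_intros) (auto simp: tendsto_norm_zero_iff)
    have dl: "((\<lambda>\<tau>. 2 * R * norm (Dl \<tau>)) \<longlongrightarrow> 2 * R * 0) at_top"
      using l by (intro tendsto_intros) (auto simp: tendsto_norm_zero_iff)
    have "\<forall>\<^sub>F \<tau> in at_top. norm (eps \<tau>) * (2 * R * LF + MF + norm (Dl \<tau>)) + 2 * R * norm (Dl' \<tau>) < \<theta>"
      using order_tendstoD(2)[OF ql] \<theta> by simp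
    moreover have "\<forall>\<^sub>F \<tau> in at_top. 2 * R * norm (Dl \<tau>) < \<theta>"
      using order_tendstoD(2)[OF dl] \<theta> by simp
    ultimately have "\<forall>\<^sub>F \<tau> in at_top. norm (eps \<tau>) * (2 * R * LF + MF + norm (Dl \<tau>)) + 2 * R * norm (Dl' \<tau>) < \<theta>
          \<and> 2 * R * norm (Dl \<tau>) < \<theta>" by (rule eventually_conj)
    then obtain T0' where T0': "\<forall>\<tau>\<ge>T0'. norm (eps \<tau>) * (2 * R * LF + MF + norm (Dl \<tau>)) + 2 * R * norm (Dl' \<tau>) < \<theta>
          \<and> 2 * R * norm (Dl \<tau>) < \<theta>" unfolding eventually_at_top_linorder by blast
    define T0 where "T0 = max T0' 0"
    have T0: "T0 \<ge> 0" "T0 \<ge> T0'" unfolding T0_def by auto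
    define C0 where "C0 = 2 * R * (MF + norm (Dl T0))"
    have WT0: "W T0 \<le> C0" unfolding C0_def using W3 T0 by blast
    have "((\<lambda>t. exp (- t) * (exp T0 * C0)) \<longlongrightarrow> 0 * (exp T0 * C0)) at_top"
      by (intro tendsto_intros exp_neg_0)
    then have "\<forall>\<^sub>F t in at_top. exp (- t) * (exp T0 * C0) < \<theta>" using order_tendstoD(2) \<theta> by fastforce
    moreover have "\<forall>\<^sub>F t in at_top. t \<ge> T0" by (rule eventually_ge_at_top)
    ultimately show "\<forall>\<^sub>F t in at_top. dist (x t) xs < \<epsilon>"
    proof eventually_elim
      case (elim t)
      have t0: "t \<ge> 0" using elim T0 by linarith
      have hq: "\<forall>\<tau>\<in>{T0<..t}. norm (eps \<tau>) * (2 * R * LF + MF + norm (Dl \<tau>)) + 2 * R * norm (Dl' \<tau>) \<le> \<theta>"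
        using T0' T0 by (auto intro: less_imp_le)
      have "W t \<le> exp (-(t - T0)) * W T0 + \<theta>" using W4 T0(1) elim(2) \<theta> hq by auto
      also have "exp (-(t - T0)) * W T0 \<le> exp (-(t - T0)) * C0" using WT0 by (intro mult_left_mono) auto
      also have "exp (-(t - T0)) * C0 = exp (- t) * (exp T0 * C0)" by (simp add: exp_diff exp_minus field_simps)
      finally have Wt: "W t \<le> 2 * \<theta>" using elim(1) by linarith
      have "2 * R * norm (Dl t) < \<theta>" using T0' T0 elim(2) by auto
      then have "c * (norm (x t - xs))\<^sup>2 < 3 * \<theta>" using W1 t0 Wt by fastforce
      then have "(norm (x t - xs))\<^sup>2 < 3 * \<epsilon>\<^sup>2 / 8" unfolding \<theta>_def using c by (simp add: field_simps)
      also have "\<dots> < \<epsilon>\<^sup>2" using \<epsilon> by simp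
      finally have "(norm (x t - xs))\<^sup>2 < \<epsilon>\<^sup>2" .
      then have "norm (x t - xs) < \<epsilon>" using \<epsilon> by (simp add: power_less_imp_less_base)
      then show ?case by (simp add: dist_norm)
    qed
  qed
  show ?thesis
    apply (rule conjI)
     apply (rule exI[of _ w], rule exI[of _ g1], rule exI[of _ g2])
     apply (intro conjI KL K1 K2)
    subgoal
      apply (intro allI impI)
      apply (elim conjE)
      apply (rule part1[THEN spec, THEN mp])
            apply assumption+
      done
    subgoal
      apply (intro allI impI)
      apply (elim conjE)
      apply (rule part2)
             apply assumption+
      done
    done
qed


end
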